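(* Let $t\ge 2$, $q\ge 1$ and $s_1,\dots,s_t\ge 3$ be integers, let $G=K_1\vee(C_{s_1}\cup\cdots\cup C_{s_t}\cup qK_2)$ have $n$ vertices, and let $H$ be a simple graph with the same $Q$-spectrum as $G$. If $n\ge 52$ or $q\ge 12$, then the maximum degree of $H$ equals the maximum degree of $G$, namely $n-1$.
   Context: Graphs are simple. $K_1\vee H$ adds one vertex adjacent to every vertex of $H$; $\cup$ is disjoint union; $qK_2$ is $q$ disjoint edges; $C_s$ is the cycle on $s$ vertices. The $Q$-spectrum is the multiset of eigenvalues of $Q=A+D$ (adjacency matrix plus diagonal degree matrix). *)

theory Defs
  imports "HOL-Computational_Algebra.Computational_Algebra" "Jordan_Normal_Form.Char_Poly"
begin

definition simple_graph :: "nat \<Rightarrow> (nat \<Rightarrow> nat \<Rightarrow> bool) \<Rightarrow> bool" where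
  "simple_graph n E \<longleftrightarrow> (\<forall>i j. E i j \<longrightarrow> i < n \<and> j < n) \<and> (\<forall>i j. E i j \<longrightarrow> E j i) \<and> (\<forall>i. \<not> E i i)"

definition deg :: "nat \<Rightarrow> (nat \<Rightarrow> nat \<Rightarrow> bool) \<Rightarrow> nat \<Rightarrow> nat" where
  "deg n E i = card {j. j < n \<and> E i j}"

definition max_deg :: "nat \<Rightarrow> (nat \<Rightarrow> nat \<Rightarrow> bool) \<Rightarrow> nat" where
  "max_deg n E = Max (deg n E ` {0..<n})"

definition Q_matrix :: "nat \<Rightarrow> (nat \<Rightarrow> nat \<Rightarrow> bool) \<Rightarrow> complex mat" where
  "Q_matrix n E = mat n n (\<lambda>(i, j). (if E i j then 1 else 0) + (if i = j then of_nat (deg n E i) else 0))"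

definition Q_spectrum :: "nat \<Rightarrow> (nat \<Rightarrow> nat \<Rightarrow> bool) \<Rightarrow> complex multiset" where
  "Q_spectrum n E = proots (char_poly (Q_matrix n E))"

text \<open>Disjoint union of cycles C_{s_1},...,C_{s_t} on {0..<sum s}: cycle k occupies the
  consecutive block starting at offset sum (take k s).\<close>
definition cycles_adj :: "nat list \<Rightarrow> nat \<Rightarrow> nat \<Rightarrow> bool" where
  "cycles_adj s u v \<longleftrightarrow> (\<exists>k < length s. let off = sum_list (take k s); c = s ! k in
      off \<le> u \<and> u < off + c \<and> off \<le> v \<and> v < off + c \<and>
      (v - off = (u - off + 1) mod c \<or> u - off = (v - off + 1) mod c))"

text \<open>q K_2 placed on {a..<a+2q}: vertices a+2j and a+2j+1 adjacent.\<close>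
definition matching_adj :: "nat \<Rightarrow> nat \<Rightarrow> nat \<Rightarrow> nat \<Rightarrow> bool" where
  "matching_adj a q u v \<longleftrightarrow> a \<le> u \<and> u < a + 2 * q \<and> a \<le> v \<and> v < a + 2 * q \<and> u \<noteq> v \<and>
      (u - a) div 2 = (v - a) div 2"

definition G_order :: "nat list \<Rightarrow> nat \<Rightarrow> nat" where
  "G_order s q = 1 + sum_list s + 2 * q"

text \<open>K_1 \<or> (C_{s_1} \<union> ... \<union> C_{s_t} \<union> q K_2): vertex 0 is the cone vertex, vertex i+1
  corresponds to vertex i of the disjoint union.\<close>
definition G_adj :: "nat list \<Rightarrow> nat \<Rightarrow> nat \<Rightarrow> nat \<Rightarrow> bool" where
  "G_adj s q i j \<longleftrightarrow> i < G_order s q \<and> j < G_order s q \<and> i \<noteq> j \<and>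
     (i = 0 \<or> j = 0 \<or> cycles_adj s (i - 1) (j - 1) \<or> matching_adj (sum_list s) q (i - 1) (j - 1))"

end

theory Submission
  imports Defs "Jordan_Normal_Form.Schur_Decomposition"
begin


definition hermitian :: "complex mat \<Rightarrow> bool" where
  "hermitian A \<longleftrightarrow> (\<forall>i<dim_row A. \<forall>j<dim_row A. A $$ (i,j) = cnj (A $$ (j,i)))"

definition nrm :: "complex vec \<Rightarrow> complex vec" where
  "nrm w = complex_of_real (1 / sqrt (Re (w \<bullet>c w))) \<cdot>\<^sub>v w"

lemma cscalar_real: fixes w :: "complex vec" shows "w \<bullet>c w = complex_of_real (Re (w \<bullet>c w))"
proof -
  have "w \<bullet>c w \<ge> 0" by auto
  then show ?thesis by (simp add: complex_eq_iff less_eq_complex_def)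
qed

lemma cscalar_pos: fixes w :: "complex vec" assumes "w \<in> carrier_vec n" "w \<noteq> 0\<^sub>v n"
  shows "Re (w \<bullet>c w) > 0"
proof -
  have "w \<bullet>c w > 0" using assms by simp
  then show ?thesis by (simp add: less_complex_def)
qed

lemma nrm_carrier[simp]: "w \<in> carrier_vec n \<Longrightarrow> nrm w \<in> carrier_vec n"
  unfolding nrm_def by simp

lemma cscalar_smult: fixes v w :: "complex vec"
  assumes "v \<in> carrier_vec n" "w \<in> carrier_vec n"
  shows "(a \<cdot>\<^sub>v v) \<bullet>c (b \<cdot>\<^sub>v w) = a * cnj b * (v \<bullet>c w)"
  using assms by (simp add: conjugate_smult_vec)

lemma nrm_cscalar: fixes v w :: "complex vec"
  assumes "v \<in> carrier_vec n" "w \<in> carrier_vec n"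
  shows "nrm v \<bullet>c nrm w = complex_of_real (1 / sqrt (Re (v \<bullet>c v)) * (1 / sqrt (Re (w \<bullet>c w)))) * (v \<bullet>c w)"
  unfolding nrm_def by (subst cscalar_smult[OF assms], simp)

lemma nrm_self: fixes v :: "complex vec"
  assumes "v \<in> carrier_vec n" "v \<noteq> 0\<^sub>v n"
  shows "nrm v \<bullet>c nrm v = 1"
proof -
  have p: "Re (v \<bullet>c v) > 0" using cscalar_pos assms by blast
  have "nrm v \<bullet>c nrm v = complex_of_real (1 / sqrt (Re (v \<bullet>c v)) * (1 / sqrt (Re (v \<bullet>c v)))) * complex_of_real (Re (v \<bullet>c v))"
    using nrm_cscalar[OF assms(1) assms(1)] cscalar_real[of v] by metis
  also have "\<dots> = complex_of_real (1 / sqrt (Re (v \<bullet>c v)) * (1 / sqrt (Re (v \<bullet>c v))) * Re (v \<bullet>c v))"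
    by simp
  also have "1 / sqrt (Re (v \<bullet>c v)) * (1 / sqrt (Re (v \<bullet>c v))) * Re (v \<bullet>c v) = 1"
    using p by (simp add: field_simps)
  finally show ?thesis by simp
qed

lemma nrm_one: fixes v :: "complex vec" assumes "v \<bullet>c v = 1" shows "nrm v = v"
  unfolding nrm_def using assms by simp

lemma nrm_nonzero: fixes v :: "complex vec"
  assumes "v \<in> carrier_vec n" "v \<noteq> 0\<^sub>v n" shows "nrm v \<noteq> 0\<^sub>v n"
  using nrm_self[OF assms] assms by auto

definition orthonormal :: "nat \<Rightarrow> complex vec list \<Rightarrow> bool" where
  "orthonormal n ws \<longleftrightarrow> length ws = n \<and> set ws \<subseteq> carrier_vec n \<and>
     (\<forall>i<n. \<forall>j<n. ws ! i \<bullet>c ws ! j = (if i = j then 1 else 0))"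

definition adjm :: "nat \<Rightarrow> complex vec list \<Rightarrow> complex mat" where
  "adjm n ws = mat n n (\<lambda>(i,j). cnj (ws ! i $ j))"

lemma adjm_carrier[simp]: "adjm n ws \<in> carrier_mat n n" unfolding adjm_def by auto
lemma adjm_dims[simp]: "dim_row (adjm n ws) = n" "dim_col (adjm n ws) = n" unfolding adjm_def by auto

lemma sum3_swap: "(\<Sum>a\<in>A. \<Sum>c\<in>C. \<Sum>b\<in>B. f a b c) = (\<Sum>b\<in>B. \<Sum>c\<in>C. \<Sum>a\<in>A. f a b c)"
proof -
  have "(\<Sum>a\<in>A. \<Sum>c\<in>C. \<Sum>b\<in>B. f a b c) = (\<Sum>a\<in>A. \<Sum>b\<in>B. \<Sum>c\<in>C. f a b c)"
    by (rule sum.cong[OF refl], rule sum.swap)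
  also have "\<dots> = (\<Sum>b\<in>B. \<Sum>a\<in>A. \<Sum>c\<in>C. f a b c)" by (rule sum.swap)
  also have "\<dots> = (\<Sum>b\<in>B. \<Sum>c\<in>C. \<Sum>a\<in>A. f a b c)" by (rule sum.cong[OF refl], rule sum.swap)
  finally show ?thesis .
qed

lemma cscalar_sum: fixes x y :: "complex vec"
  assumes "x \<in> carrier_vec n" "y \<in> carrier_vec n"
  shows "x \<bullet>c y = (\<Sum>a<n. x $ a * cnj (y $ a))"
  using assms unfolding scalar_prod_def by (simp add: atLeast0LessThan)

lemma mat_of_cols_mult_vec: fixes x :: "complex vec"
  assumes "length ws = n" "set ws \<subseteq> carrier_vec n" "x \<in> carrier_vec n" "a < n"
  shows "row (mat_of_cols n ws) a \<bullet> x = (\<Sum>b<n. ws ! b $ a * x $ b)"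
proof -
  have "row (mat_of_cols n ws) a = vec n (\<lambda>b. ws ! b $ a)" using assms
    by (intro eq_vecI, auto simp: mat_of_cols_def)
  then show ?thesis using assms by (simp add: scalar_prod_def atLeast0LessThan)
qed

lemma orth_preserve: fixes x y :: "complex vec"
  assumes o: "orthonormal n ws" and x: "x \<in> carrier_vec n" and y: "y \<in> carrier_vec n"
  shows "(mat_of_cols n ws *\<^sub>v x) \<bullet>c (mat_of_cols n ws *\<^sub>v y) = x \<bullet>c y"
proof -
  let ?W = "mat_of_cols n ws"
  have l: "length ws = n" and c: "set ws \<subseteq> carrier_vec n" using o unfolding orthonormal_def by auto
  have Wc: "?W \<in> carrier_mat n n" using l by auto
  have "(?W *\<^sub>v x) \<bullet>c (?W *\<^sub>v y) = (\<Sum>a<n. (\<Sum>b<n. ws ! b $ a * x $ b) * cnj (\<Sum>c<n. ws ! c $ a * y $ c))"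
    using Wc x y l c by (subst cscalar_sum[of _ n], auto simp: mat_of_cols_mult_vec)
  also have "\<dots> = (\<Sum>a<n. \<Sum>c<n. \<Sum>b<n. x $ b * (cnj (y $ c) * (ws ! b $ a * cnj (ws ! c $ a))))"
    by (simp add: sum_distrib_left sum_distrib_right cnj_sum mult_ac)
  also have "\<dots> = (\<Sum>b<n. \<Sum>c<n. \<Sum>a<n. x $ b * (cnj (y $ c) * (ws ! b $ a * cnj (ws ! c $ a))))"
    by (rule sum3_swap)
  also have "\<dots> = (\<Sum>b<n. \<Sum>c<n. x $ b * (cnj (y $ c) * (ws ! b \<bullet>c ws ! c)))"
  proof (rule sum.cong[OF refl], rule sum.cong[OF refl])
    fix b c assume "b \<in> {..<n}" "c \<in> {..<n}"
    then have "ws ! b \<in> carrier_vec n" "ws ! c \<in> carrier_vec n" using l c by auto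
    then show "(\<Sum>a<n. x $ b * (cnj (y $ c) * (ws ! b $ a * cnj (ws ! c $ a)))) = x $ b * (cnj (y $ c) * (ws ! b \<bullet>c ws ! c))"
      by (subst cscalar_sum[of _ n], auto simp: sum_distrib_left mult_ac)
  qed
  also have "\<dots> = (\<Sum>b<n. \<Sum>c<n. if c = b then x $ b * cnj (y $ b) else 0)"
    using o unfolding orthonormal_def by (intro sum.cong, auto)
  also have "\<dots> = x \<bullet>c y" using x y by (simp add: cscalar_sum[of _ n])
  finally show ?thesis .
qed

lemma adjm_mult: assumes o: "orthonormal n ws"
  shows "adjm n ws * mat_of_cols n ws = 1\<^sub>m n"
proof (rule eq_matI)
  have l: "length ws = n" and c: "set ws \<subseteq> carrier_vec n" using o unfolding orthonormal_def by auto
  fix i j assume i: "i < dim_row (1\<^sub>m n)" and j: "j < dim_col (1\<^sub>m n)"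
  then have ij: "i < n" "j < n" by auto
  have wi: "ws ! i \<in> carrier_vec n" "ws ! j \<in> carrier_vec n" using ij l c by auto
  have "(adjm n ws * mat_of_cols n ws) $$ (i, j) = (\<Sum>a<n. cnj (ws ! i $ a) * ws ! j $ a)"
    using ij l unfolding adjm_def mat_of_cols_def by (simp add: scalar_prod_def atLeast0LessThan)
  also have "\<dots> = ws ! j \<bullet>c ws ! i" using wi by (simp add: cscalar_sum[of _ n] mult.commute)
  also have "\<dots> = 1\<^sub>m n $$ (i, j)" using o ij unfolding orthonormal_def by auto
  finally show "(adjm n ws * mat_of_cols n ws) $$ (i, j) = 1\<^sub>m n $$ (i, j)" .
qed (insert o, auto simp: adjm_def orthonormal_def)


lemma mult_adjm: assumes o: "orthonormal n ws"
  shows "mat_of_cols n ws * adjm n ws = 1\<^sub>m n"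
proof -
  have l: "length ws = n" using o unfolding orthonormal_def by auto
  show ?thesis by (rule mat_mult_left_right_inverse[OF adjm_carrier _ adjm_mult[OF o]], insert l, auto)
qed

lemma adjm_A_entry: fixes A :: "complex mat"
  assumes o: "orthonormal n ws" and A: "A \<in> carrier_mat n n" and ij: "i < n" "j < n"
  shows "(adjm n ws * A * mat_of_cols n ws) $$ (i,j) = (A *\<^sub>v ws ! j) \<bullet>c ws ! i"
proof -
  have l: "length ws = n" and c: "set ws \<subseteq> carrier_vec n" using o unfolding orthonormal_def by auto
  have wi: "ws ! i \<in> carrier_vec n" "ws ! j \<in> carrier_vec n" using ij l c by auto
  have W: "mat_of_cols n ws \<in> carrier_mat n n" using l by auto
  have "(adjm n ws * A * mat_of_cols n ws) $$ (i,j) = (adjm n ws * (A * mat_of_cols n ws)) $$ (i,j)"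
    using A W by (subst assoc_mult_mat[of _ n n _ n _ n], auto)
  also have "\<dots> = row (adjm n ws) i \<bullet> (A *\<^sub>v ws ! j)" using ij A W l wi by (simp add: mult_mat_vec_def)
  also have "row (adjm n ws) i = conjugate (ws ! i)" using ij wi unfolding adjm_def
    by (intro eq_vecI, auto)
  also have "conjugate (ws ! i) \<bullet> (A *\<^sub>v ws ! j) = (A *\<^sub>v ws ! j) \<bullet>c ws ! i"
    by (rule conjugate_vec_sprod_comm[symmetric], insert A wi, auto)
  finally show ?thesis .
qed

lemma row_sum: fixes A :: "complex mat"
  assumes "A \<in> carrier_mat n m" "x \<in> carrier_vec m" "a < n"
  shows "row A a \<bullet> x = (\<Sum>b<m. A $$ (a,b) * x $ b)"
  using assms by (simp add: scalar_prod_def atLeast0LessThan)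

lemma mult_vec_sum: fixes A :: "complex mat"
  assumes "A \<in> carrier_mat n m" "x \<in> carrier_vec m" "a < n"
  shows "(A *\<^sub>v x) $ a = (\<Sum>b<m. A $$ (a,b) * x $ b)"
  using assms by (simp add: row_sum)

lemma hermitianD: fixes A :: "complex mat"
  assumes h: "hermitian A" and A: "A \<in> carrier_mat n n" and i: "i < n" and j: "j < n"
  shows "A $$ (i,j) = cnj (A $$ (j,i))"
proof -
  have ii: "i < dim_row A" and jj: "j < dim_row A" using A i j by auto
  have "\<forall>i<dim_row A. \<forall>j<dim_row A. A $$ (i,j) = cnj (A $$ (j,i))" using h unfolding hermitian_def .
  from this[rule_format, OF ii jj] show ?thesis .
qed

lemma herm_form: fixes A :: "complex mat"
  assumes A: "A \<in> carrier_mat n n" and h: "hermitian A" and x: "x \<in> carrier_vec n" and y: "y \<in> carrier_vec n"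
  shows "(A *\<^sub>v x) \<bullet>c y = cnj ((A *\<^sub>v y) \<bullet>c x)"
proof -
  have hA: "\<And>a b. a < n \<Longrightarrow> b < n \<Longrightarrow> A $$ (a,b) = cnj (A $$ (b,a))" by (rule hermitianD[OF h A])
  have "(A *\<^sub>v x) \<bullet>c y = (\<Sum>a<n. (\<Sum>b<n. A $$ (a,b) * x $ b) * cnj (y $ a))"
    using A x y by (subst cscalar_sum[of _ n], auto simp: row_sum[OF A x])
  also have "\<dots> = (\<Sum>a<n. \<Sum>b<n. A $$ (a,b) * x $ b * cnj (y $ a))"
    by (simp add: sum_distrib_right)
  also have "\<dots> = (\<Sum>b<n. \<Sum>a<n. A $$ (a,b) * x $ b * cnj (y $ a))" by (rule sum.swap)
  also have "\<dots> = (\<Sum>b<n. \<Sum>a<n. cnj (A $$ (b,a) * y $ a * cnj (x $ b)))"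
  proof (intro sum.cong refl)
    fix b a assume "b \<in> {..<n}" "a \<in> {..<n}"
    then have "A $$ (a,b) = cnj (A $$ (b,a))" by (intro hA) auto
    then show "A $$ (a,b) * x $ b * cnj (y $ a) = cnj (A $$ (b,a) * y $ a * cnj (x $ b))" by (simp add: mult_ac)
  qed
  also have "\<dots> = cnj ((A *\<^sub>v y) \<bullet>c x)"
    using A x y by (subst cscalar_sum[of _ n], auto simp: row_sum[OF A y] cnj_sum sum_distrib_right)
  finally show ?thesis .
qed

lemma herm_eigen_real: fixes A :: "complex mat"
  assumes A: "A \<in> carrier_mat n n" and h: "hermitian A" and v: "v \<in> carrier_vec n" "v \<noteq> 0\<^sub>v n"
    and ev: "A *\<^sub>v v = e \<cdot>\<^sub>v v"
  shows "cnj e = e"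
proof -
  have "(A *\<^sub>v v) \<bullet>c v = cnj ((A *\<^sub>v v) \<bullet>c v)" by (rule herm_form[OF A h v(1) v(1)])
  then have "e * (v \<bullet>c v) = cnj (e * (v \<bullet>c v))" using v by (simp add: ev)
  moreover obtain r where r: "v \<bullet>c v = complex_of_real r" using cscalar_real by blast
  ultimately have "e * complex_of_real r = cnj e * complex_of_real r" by simp
  moreover have "v \<bullet>c v \<noteq> 0" using v by simp
  ultimately show ?thesis using r by simp
qed


lemma mat_of_cols_unit0: fixes ws :: "complex vec list"
  assumes l: "length ws = n" and c: "set ws \<subseteq> carrier_vec n" and n: "0 < n"
  shows "mat_of_cols n ws *\<^sub>v unit_vec n 0 = ws ! 0"
proof (rule eq_vecI)
  have w0: "ws ! 0 \<in> carrier_vec n" using l c n by auto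
  show "dim_vec (mat_of_cols n ws *\<^sub>v unit_vec n 0) = dim_vec (ws ! 0)" using w0 by simp
  fix a assume "a < dim_vec (ws ! 0)"
  then have a: "a < n" using w0 by simp
  then show "(mat_of_cols n ws *\<^sub>v unit_vec n 0) $ a = ws ! 0 $ a"
    using a l c n by (simp add: mat_of_cols_def)
qed

lemma cscalar_vCons: fixes u w :: "complex vec"
  shows "vCons a u \<bullet>c vCons b w = a * cnj b + u \<bullet>c w"
  by simp

lemma cscalar_unit0_vCons: fixes u :: "complex vec"
  assumes "u \<in> carrier_vec k"
  shows "unit_vec (Suc k) 0 \<bullet>c vCons 0 u = 0" "vCons 0 u \<bullet>c unit_vec (Suc k) 0 = 0"
    "(unit_vec (Suc k) 0 :: complex vec) \<bullet>c unit_vec (Suc k) 0 = 1"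
proof -
  have e: "unit_vec (Suc k) 0 = vCons 1 (0\<^sub>v k)"
    by (intro eq_vecI, auto simp: unit_vec_def vec_index_vCons)
  show "unit_vec (Suc k) 0 \<bullet>c vCons 0 u = 0" "vCons 0 u \<bullet>c unit_vec (Suc k) 0 = 0"
    "(unit_vec (Suc k) 0 :: complex vec) \<bullet>c unit_vec (Suc k) 0 = 1"
    unfolding e using assms by (auto simp: conjugate_complex_def)
qed

lemma char_poly_1x1: "char_poly (mat 1 1 (\<lambda>_. e)) = [:- (e::complex), 1:]"
  by (simp add: char_poly_defs det_def sign_def)

lemma spectral:
  fixes A :: "complex mat"
  assumes "A \<in> carrier_mat n n" "hermitian A"
  shows "\<exists>us es. orthonormal n us \<and> length es = n \<and> (\<forall>i<n. A *\<^sub>v (us ! i) = es ! i \<cdot>\<^sub>v us ! i)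
     \<and> char_poly A = (\<Prod>e\<leftarrow>es. [:- e, 1:])"
  using assms
proof (induction n arbitrary: A)
  case 0
  have "char_poly A = 1" using degree_monic_char_poly[OF "0.prems"(1)] degree_0_id[of "char_poly A"]
    by (metis one_pCons)
  then show ?case by (intro exI[of _ "[]"], auto simp: orthonormal_def)
next
  case (Suc k A)
  define n where "n = Suc k"
  have A: "A \<in> carrier_mat n n" and h: "hermitian A" using Suc.prems n_def by auto
  obtain es0 where cp0: "char_poly A = (\<Prod>a\<leftarrow>es0. [:- a, 1:])" and len0: "length es0 = n"
    using char_poly_factorized[OF A] by blast
  then obtain e es1 where es0: "es0 = e # es1" unfolding n_def by (cases es0, auto)
  have ev: "eigenvalue A e" unfolding eigenvalue_root_char_poly[OF A] cp0 es0 by simp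
  define v where "v = find_eigenvector A e"
  have "eigenvector A v e" unfolding v_def by (rule find_eigenvector[OF A ev])
  then have vc: "v \<in> carrier_vec n" and v0: "v \<noteq> 0\<^sub>v n" and Av: "A *\<^sub>v v = e \<cdot>\<^sub>v v"
    unfolding eigenvector_def using A by auto
  define v1 where "v1 = nrm v"
  have v1c: "v1 \<in> carrier_vec n" unfolding v1_def using vc by simp
  have v1n: "v1 \<bullet>c v1 = 1" unfolding v1_def by (rule nrm_self[OF vc v0])
  have v10: "v1 \<noteq> 0\<^sub>v n" unfolding v1_def by (rule nrm_nonzero[OF vc v0])
  have Av1: "A *\<^sub>v v1 = e \<cdot>\<^sub>v v1" unfolding v1_def nrm_def
    using A vc by (simp add: mult_mat_vec Av smult_smult_assoc mult.commute)
  have ereal: "cnj e = e" by (rule herm_eigen_real[OF A h v1c v10 Av1])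
  interpret cof_vec_space n "TYPE(complex)" .
  define bs where "bs = basis_completion v1"
  have bsc: "set bs \<subseteq> carrier_vec n" and bsd: "distinct bs" and bsi: "\<not> lin_dep (set bs)"
    and bsl: "length bs = n" and bsh: "hd bs = v1"
    using basis_completion[OF v1c v10] unfolding bs_def by auto
  then obtain vs where bsv: "bs = v1 # vs" unfolding n_def by (cases bs, auto)
  define ws where "ws = gram_schmidt n bs"
  have wsc: "set ws \<subseteq> carrier_vec n" and wso: "corthogonal ws" and wsl: "length ws = n"
    using gram_schmidt_result[OF bsc bsd bsi ws_def] bsl by auto
  have wsh: "ws ! 0 = v1"
  proof -
    have "hd ws = v1" unfolding ws_def bsv by (rule gram_schmidt_hd[OF v1c])
    then show ?thesis using wsl unfolding n_def by (cases ws, auto)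
  qed
  define ws2 where "ws2 = map nrm ws"
  have ws2o: "orthonormal n ws2" unfolding orthonormal_def
  proof (intro conjI allI impI)
    show "length ws2 = n" unfolding ws2_def using wsl by simp
    show "set ws2 \<subseteq> carrier_vec n" unfolding ws2_def using wsc by auto
    fix i j assume i: "i < n" and j: "j < n"
    have wi: "ws ! i \<in> carrier_vec n" "ws ! j \<in> carrier_vec n" using i j wsl wsc by auto
    have oij: "(ws ! i \<bullet>c ws ! j = 0) = (i \<noteq> j)" using corthogonalD[OF wso] i j wsl by auto
    have wi0: "ws ! i \<noteq> 0\<^sub>v n"
    proof
      assume "ws ! i = 0\<^sub>v n" then have "ws ! i \<bullet>c ws ! i = 0" by simp
      with corthogonalD[OF wso] i wsl show False by auto
    qed
    show "ws2 ! i \<bullet>c ws2 ! j = (if i = j then 1 else 0)"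
    proof (cases "i = j")
      case True
      then show ?thesis unfolding ws2_def using i wsl nrm_self[OF wi(1) wi0] by simp
    next
      case False
      then show ?thesis unfolding ws2_def using i j wsl nrm_cscalar[OF wi] oij by simp
    qed
  qed
  have ws2h: "ws2 ! 0 = v1" unfolding ws2_def using wsl wsh nrm_one[OF v1n] unfolding n_def by simp
  have ws2l: "length ws2 = n" and ws2c: "set ws2 \<subseteq> carrier_vec n" using ws2o unfolding orthonormal_def by auto
  have ws2n: "\<And>i j. i < n \<Longrightarrow> j < n \<Longrightarrow> ws2 ! i \<bullet>c ws2 ! j = (if i = j then 1 else 0)"
    using ws2o unfolding orthonormal_def by auto
  define W where "W = mat_of_cols n ws2"
  define WH where "WH = adjm n ws2"
  have Wc: "W \<in> carrier_mat n n" unfolding W_def using ws2l by auto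
  have WHc: "WH \<in> carrier_mat n n" unfolding WH_def by simp
  have WHW: "WH * W = 1\<^sub>m n" unfolding WH_def W_def by (rule adjm_mult[OF ws2o])
  have WWH: "W * WH = 1\<^sub>m n" unfolding WH_def W_def by (rule mult_adjm[OF ws2o])
  define A' where "A' = WH * A * W"
  have A'c: "A' \<in> carrier_mat n n" unfolding A'_def using WHc A Wc by auto
  have A'e: "\<And>i j. i < n \<Longrightarrow> j < n \<Longrightarrow> A' $$ (i,j) = (A *\<^sub>v ws2 ! j) \<bullet>c ws2 ! i"
    unfolding A'_def WH_def W_def by (rule adjm_A_entry[OF ws2o A])
  have A'h: "\<And>i j. i < n \<Longrightarrow> j < n \<Longrightarrow> A' $$ (i,j) = cnj (A' $$ (j,i))"
  proof -
    fix i j assume ij: "i < n" "j < n"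
    then have wi: "ws2 ! i \<in> carrier_vec n" and wj: "ws2 ! j \<in> carrier_vec n" using ws2l ws2c by auto
    have "A' $$ (i,j) = (A *\<^sub>v ws2 ! j) \<bullet>c ws2 ! i" by (rule A'e[OF ij])
    also have "\<dots> = cnj ((A *\<^sub>v ws2 ! i) \<bullet>c ws2 ! j)" by (rule herm_form[OF A h wj wi])
    also have "(A *\<^sub>v ws2 ! i) \<bullet>c ws2 ! j = A' $$ (j,i)" by (rule A'e[OF ij(2) ij(1), symmetric])
    finally show "A' $$ (i,j) = cnj (A' $$ (j,i))" .
  qed
  have A'col: "\<And>i. i < n \<Longrightarrow> A' $$ (i,0) = (if i = 0 then e else 0)"
  proof -
    fix i assume i: "i < n"
    then have wi: "ws2 ! i \<in> carrier_vec n" using ws2l ws2c by auto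
    have "A' $$ (i,0) = (A *\<^sub>v v1) \<bullet>c ws2 ! i" using A'e[OF i] ws2h unfolding n_def by simp
    also have "\<dots> = e * (v1 \<bullet>c ws2 ! i)" using Av1 v1c wi by simp
    also have "\<dots> = (if i = 0 then e else 0)" using ws2n[of 0 i] i ws2h unfolding n_def by auto
    finally show "A' $$ (i,0) = (if i = 0 then e else 0)" .
  qed
  have A'row: "\<And>j. j < n \<Longrightarrow> A' $$ (0,j) = (if j = 0 then e else 0)"
  proof -
    fix j assume j: "j < n"
    have "A' $$ (0,j) = cnj (A' $$ (j,0))" using A'h[OF _ j] unfolding n_def by simp
    then show "A' $$ (0,j) = (if j = 0 then e else 0)" using A'col[OF j] ereal by simp
  qed
  define A3 where "A3 = mat k k (\<lambda>(i,j). A' $$ (Suc i, Suc j))"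
  have A3c: "A3 \<in> carrier_mat k k" unfolding A3_def by simp
  have A3h: "hermitian A3" unfolding hermitian_def
  proof (intro allI impI)
    fix i j assume i: "i < dim_row A3" and j: "j < dim_row A3"
    then have i': "Suc i < n" "Suc j < n" using A3c unfolding n_def by auto
    have "A3 $$ (i,j) = A' $$ (Suc i, Suc j)" using i j A3c unfolding A3_def by auto
    also have "\<dots> = cnj (A' $$ (Suc j, Suc i))" by (rule A'h[OF i'])
    also have "A' $$ (Suc j, Suc i) = A3 $$ (j,i)" using i j A3c unfolding A3_def by auto
    finally show "A3 $$ (i,j) = cnj (A3 $$ (j,i))" .
  qed
  have blk: "A' = four_block_mat (mat 1 1 (\<lambda>_. e)) (0\<^sub>m 1 k) (0\<^sub>m k 1) A3"
  proof (rule eq_matI)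
    fix i j assume i: "i < dim_row (four_block_mat (mat 1 1 (\<lambda>_. e)) (0\<^sub>m 1 k) (0\<^sub>m k 1) A3)"
      and j: "j < dim_col (four_block_mat (mat 1 1 (\<lambda>_. e)) (0\<^sub>m 1 k) (0\<^sub>m k 1) A3)"
    then have i': "i < n" and j': "j < n" using A3c unfolding n_def by auto
    show "A' $$ (i, j) = four_block_mat (mat 1 1 (\<lambda>_. e)) (0\<^sub>m 1 k) (0\<^sub>m k 1) A3 $$ (i, j)"
      using i j A3c A'col[OF i'] A'row[OF j'] i' j' unfolding A3_def n_def
      by (cases i; cases j; auto)
  qed (insert A'c A3c, auto simp: n_def)
  obtain us3 es3 where us3o: "orthonormal k us3" and es3l: "length es3 = k"
    and us3e: "\<forall>i<k. A3 *\<^sub>v (us3 ! i) = es3 ! i \<cdot>\<^sub>v us3 ! i"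
    and cp3: "char_poly A3 = (\<Prod>e\<leftarrow>es3. [:- e, 1:])"
    using Suc.IH[OF A3c A3h] by blast
  have us3l: "length us3 = k" and us3c: "set us3 \<subseteq> carrier_vec k" using us3o unfolding orthonormal_def by auto
  have sim: "similar_mat_wit A A' W WH"
  proof -
    have "W * A' * WH = (W * WH) * A * (W * WH)" unfolding A'_def using Wc WHc A
      by (simp add: assoc_mult_mat[of _ n n _ n _ n])
    also have "\<dots> = A" using A by (simp add: WWH)
    finally show ?thesis unfolding similar_mat_wit_def Let_def using A A'c Wc WHc WWH WHW by auto
  qed
  have "char_poly A = char_poly A'" by (rule char_poly_similar, unfold similar_mat_def, use sim in blast)
  also have "\<dots> = char_poly (mat 1 1 (\<lambda>_. e)) * char_poly A3"
    unfolding blk by (rule char_poly_four_block_zeros_col, auto simp: A3c)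
  also have "\<dots> = (\<Prod>e\<leftarrow>e # es3. [:- e, 1:])" unfolding char_poly_1x1 cp3 by simp
  finally have cp: "char_poly A = (\<Prod>e\<leftarrow>e # es3. [:- e, 1:])" .
  define xs where "xs = unit_vec n 0 # map (vCons 0) us3"
  have xsl: "length xs = n" unfolding xs_def n_def using us3l by simp
  have xsc: "\<And>i. i < n \<Longrightarrow> xs ! i \<in> carrier_vec n"
    unfolding xs_def n_def using us3l us3c by (auto simp: nth_Cons split: nat.split)
  have xso: "\<And>i j. i < n \<Longrightarrow> j < n \<Longrightarrow> xs ! i \<bullet>c xs ! j = (if i = j then 1 else 0)"
  proof -
    fix i j assume i: "i < n" and j: "j < n"
    have us3n: "\<And>i j. i < k \<Longrightarrow> j < k \<Longrightarrow> us3 ! i \<bullet>c us3 ! j = (if i = j then 1 else 0)"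
      using us3o unfolding orthonormal_def by auto
    show "xs ! i \<bullet>c xs ! j = (if i = j then 1 else 0)"
    proof (cases i)
      case 0
      then show ?thesis
      proof (cases j)
        case 0
        then show ?thesis using \<open>i = 0\<close> unfolding xs_def n_def using cscalar_unit0_vCons(3)[of "0\<^sub>v k" k] by simp
      next
        case (Suc j')
        then have "us3 ! j' \<in> carrier_vec k" using j us3l us3c unfolding n_def by auto
        then show ?thesis using \<open>i = 0\<close> Suc j us3l unfolding xs_def n_def using cscalar_unit0_vCons(1) by simp
      qed
    next
      case (Suc i')
      then have ui: "us3 ! i' \<in> carrier_vec k" using i us3l us3c unfolding n_def by auto
      show ?thesis
      proof (cases j)
        case 0
        then show ?thesis using Suc i us3l ui unfolding xs_def n_def using cscalar_unit0_vCons(2) by simp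
      next
        case (Suc j')
        then show ?thesis using \<open>i = Suc i'\<close> i j us3l us3n[of i' j'] unfolding xs_def n_def by simp
      qed
    qed
  qed
  define us where "us = map (\<lambda>x. W *\<^sub>v x) xs"
  have uso: "orthonormal n us" unfolding orthonormal_def
  proof (intro conjI allI impI)
    show "length us = n" unfolding us_def using xsl by simp
    show "set us \<subseteq> carrier_vec n" unfolding us_def using xsl xsc Wc by (auto simp: in_set_conv_nth)
    fix i j assume i: "i < n" and j: "j < n"
    show "us ! i \<bullet>c us ! j = (if i = j then 1 else 0)"
      unfolding us_def W_def using i j xsl orth_preserve[OF ws2o xsc[OF i] xsc[OF j]] xso[OF i j] by simp
  qed
  have AW: "A * W = W * A'"
  proof -
    have "W * A' = (W * WH) * A * W" unfolding A'_def using Wc WHc A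
      by (simp add: assoc_mult_mat[of _ n n _ n _ n])
    then show ?thesis using A Wc by (simp add: WWH)
  qed
  have A'x: "\<And>u. u \<in> carrier_vec k \<Longrightarrow> A' *\<^sub>v vCons 0 u = vCons 0 (A3 *\<^sub>v u)"
  proof -
    fix u :: "complex vec" assume u: "u \<in> carrier_vec k"
    show "A' *\<^sub>v vCons 0 u = vCons 0 (A3 *\<^sub>v u)"
    proof (rule eq_vecI)
      show "dim_vec (A' *\<^sub>v vCons 0 u) = dim_vec (vCons 0 (A3 *\<^sub>v u))" using A'c A3c unfolding n_def by simp
      fix i assume "i < dim_vec (vCons 0 (A3 *\<^sub>v u))"
      then have i: "i < n" using A3c unfolding n_def by simp
      have "(A' *\<^sub>v vCons 0 u) $ i = (\<Sum>b<Suc k. A' $$ (i,b) * vCons 0 u $ b)"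
        using A'c u i unfolding n_def by (simp add: row_sum)
      also have "\<dots> = (\<Sum>b<k. A' $$ (i, Suc b) * u $ b)"
        by (subst sum.lessThan_Suc_shift, simp)
      also have "\<dots> = vCons 0 (A3 *\<^sub>v u) $ i"
      proof (cases i)
        case 0
        then show ?thesis using A'row unfolding n_def by simp
      next
        case (Suc i')
        then show ?thesis using i A3c u unfolding n_def A3_def by (simp add: scalar_prod_def atLeast0LessThan)
      qed
      finally show "(A' *\<^sub>v vCons 0 u) $ i = vCons 0 (A3 *\<^sub>v u) $ i" .
    qed
  qed
  have use: "\<forall>i<n. A *\<^sub>v (us ! i) = (e # es3) ! i \<cdot>\<^sub>v us ! i"
  proof (intro allI impI)
    fix i assume i: "i < n"
    show "A *\<^sub>v (us ! i) = (e # es3) ! i \<cdot>\<^sub>v us ! i"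
    proof (cases i)
      case 0
      have "us ! i = v1" unfolding us_def xs_def W_def using 0 mat_of_cols_unit0[OF ws2l ws2c] ws2h
        unfolding n_def by simp
      then show ?thesis using 0 Av1 by simp
    next
      case (Suc i')
      then have i': "i' < k" using i unfolding n_def by simp
      have u: "us3 ! i' \<in> carrier_vec k" using i' us3l us3c by auto
      have ui: "us ! i = W *\<^sub>v vCons 0 (us3 ! i')" unfolding us_def xs_def using Suc i' us3l by simp
      have "A *\<^sub>v (us ! i) = (A * W) *\<^sub>v vCons 0 (us3 ! i')" unfolding ui using A Wc u unfolding n_def by simp
      also have "\<dots> = W *\<^sub>v (A' *\<^sub>v vCons 0 (us3 ! i'))" unfolding AW using Wc A'c u unfolding n_def by simp
      also have "\<dots> = W *\<^sub>v (es3 ! i' \<cdot>\<^sub>v vCons 0 (us3 ! i'))"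
      proof -
        have "vCons 0 (A3 *\<^sub>v us3 ! i') = es3 ! i' \<cdot>\<^sub>v vCons 0 (us3 ! i')"
          using us3e i' by (intro eq_vecI, auto simp: vec_index_vCons)
        then show ?thesis using A'x[OF u] by simp
      qed
      also have "\<dots> = es3 ! i' \<cdot>\<^sub>v us ! i" unfolding ui using Wc u unfolding n_def by (simp add: mult_mat_vec)
      finally show ?thesis using Suc by simp
    qed
  qed
  show ?case
    by (intro exI[of _ us] exI[of _ "e # es3"], insert uso use cp es3l, auto simp: n_def)
qed


lemma expand:
  fixes A :: "complex mat"
  assumes o: "orthonormal n us" and A: "A \<in> carrier_mat n n" and es: "length es = n"
    and ev: "\<forall>k<n. A *\<^sub>v (us ! k) = es ! k \<cdot>\<^sub>v us ! k" and x: "x \<in> carrier_vec n"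
  shows "x \<bullet>c x = (\<Sum>k<n. (x \<bullet>c us ! k) * cnj (x \<bullet>c us ! k))"
    "(A *\<^sub>v x) \<bullet>c x = (\<Sum>k<n. es ! k * ((x \<bullet>c us ! k) * cnj (x \<bullet>c us ! k)))"
proof -
  have l: "length us = n" and c: "set us \<subseteq> carrier_vec n" using o unfolding orthonormal_def by auto
  define U where "U = mat_of_cols n us"
  define UH where "UH = adjm n us"
  have Uc: "U \<in> carrier_mat n n" unfolding U_def using l by auto
  have UHc: "UH \<in> carrier_mat n n" unfolding UH_def by simp
  define cv where "cv = UH *\<^sub>v x"
  have cvc: "cv \<in> carrier_vec n" unfolding cv_def using UHc x by simp
  have xU: "x = U *\<^sub>v cv"
  proof -
    have "U *\<^sub>v cv = (U * UH) *\<^sub>v x" unfolding cv_def using Uc UHc x by simp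
    also have "U * UH = 1\<^sub>m n" unfolding U_def UH_def by (rule mult_adjm[OF o])
    finally show ?thesis using x by simp
  qed
  have cvk: "\<And>k. k < n \<Longrightarrow> cv $ k = x \<bullet>c us ! k"
  proof -
    fix k assume k: "k < n"
    then have uk: "us ! k \<in> carrier_vec n" using l c by auto
    have "cv $ k = (\<Sum>b<n. UH $$ (k,b) * x $ b)" unfolding cv_def using UHc x k by (simp add: row_sum)
    also have "\<dots> = (\<Sum>b<n. x $ b * cnj (us ! k $ b))" unfolding UH_def using k
      by (intro sum.cong refl, auto simp: adjm_def)
    also have "\<dots> = x \<bullet>c us ! k" using x uk by (simp add: cscalar_sum[of _ n])
    finally show "cv $ k = x \<bullet>c us ! k" .
  qed
  have "x \<bullet>c x = cv \<bullet>c cv" unfolding xU U_def by (rule orth_preserve[OF o cvc cvc])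
  also have "\<dots> = (\<Sum>k<n. (x \<bullet>c us ! k) * cnj (x \<bullet>c us ! k))"
    using cvc by (simp add: cscalar_sum[of _ n] cvk)
  finally show "x \<bullet>c x = (\<Sum>k<n. (x \<bullet>c us ! k) * cnj (x \<bullet>c us ! k))" .
  define D where "D = mat n n (\<lambda>(i,j). if i = j then es ! i else 0)"
  have Dc: "D \<in> carrier_mat n n" unfolding D_def by simp
  have AU: "A * U = U * D"
  proof (rule eq_matI)
    fix a k assume a: "a < dim_row (U * D)" and k: "k < dim_col (U * D)"
    then have a': "a < n" and k': "k < n" using Uc Dc by auto
    have uk: "us ! k \<in> carrier_vec n" using k' l c by auto
    have "(A * U) $$ (a,k) = (A *\<^sub>v us ! k) $ a"
      using a' k' A Uc uk l unfolding U_def by (simp add: mult_mat_vec_def)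
    also have "\<dots> = es ! k * us ! k $ a" using ev k' a' uk by simp
    also have "\<dots> = (\<Sum>b<n. U $$ (a,b) * D $$ (b,k))"
    proof -
      have "(\<Sum>b<n. U $$ (a,b) * D $$ (b,k)) = (\<Sum>b<n. if b = k then us ! k $ a * es ! k else 0)"
        unfolding U_def D_def using a' k' l by (intro sum.cong refl, auto simp: mat_of_cols_def)
      also have "\<dots> = es ! k * us ! k $ a" using k' by simp
      finally show ?thesis by simp
    qed
    also have "\<dots> = (U * D) $$ (a,k)" using a' k' Uc Dc by (simp add: scalar_prod_def atLeast0LessThan)
    finally show "(A * U) $$ (a,k) = (U * D) $$ (a,k)" .
  qed (insert A Uc Dc, auto)
  have Dcv: "\<And>k. k < n \<Longrightarrow> row D k \<bullet> cv = es ! k * cv $ k"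
  proof -
    fix k assume k: "k < n"
    have "row D k \<bullet> cv = (\<Sum>b<n. D $$ (k,b) * cv $ b)" using Dc cvc k by (simp add: row_sum)
    also have "\<dots> = (\<Sum>b<n. if b = k then es ! k * cv $ k else 0)" unfolding D_def using k
      by (intro sum.cong refl, auto)
    finally show "row D k \<bullet> cv = es ! k * cv $ k" using k by simp
  qed
  have "A *\<^sub>v x = U *\<^sub>v (D *\<^sub>v cv)"
  proof -
    have "A *\<^sub>v x = (A * U) *\<^sub>v cv" unfolding xU using A Uc cvc by simp
    also have "\<dots> = U *\<^sub>v (D *\<^sub>v cv)" unfolding AU using Uc Dc cvc by simp
    finally show ?thesis .
  qed
  then have "(A *\<^sub>v x) \<bullet>c x = (D *\<^sub>v cv) \<bullet>c cv"
    using orth_preserve[OF o _ cvc, of "D *\<^sub>v cv"] Dc cvc xU unfolding U_def by simp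
  also have "\<dots> = (\<Sum>k<n. es ! k * ((x \<bullet>c us ! k) * cnj (x \<bullet>c us ! k)))"
    using Dc cvc by (simp add: cscalar_sum[of _ n] Dcv cvk mult.assoc)
  finally show "(A *\<^sub>v x) \<bullet>c x = (\<Sum>k<n. es ! k * ((x \<bullet>c us ! k) * cnj (x \<bullet>c us ! k)))" .
qed


lemma proots_linear_prod: "proots (\<Prod>e\<leftarrow>es. [:- e, 1:]) = mset (es :: complex list)"
proof (induction es)
  case (Cons a es)
  have nz: "(\<Prod>e\<leftarrow>es. [:- e, 1:]) \<noteq> (0 :: complex poly)" by (subst prod_list_zero_iff, auto)
  have "proots (\<Prod>e\<leftarrow>a # es. [:- e, 1:]) = proots ([:- a, 1:] * (\<Prod>e\<leftarrow>es. [:- e, 1:]))" by simp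
  also have "\<dots> = proots [:- a, 1:] + proots (\<Prod>e\<leftarrow>es. [:- e, 1:])" using nz by (intro proots_mult, auto)
  also have "\<dots> = mset (a # es)" using Cons proots_linear_factor[of "- a"] by simp
  finally show ?case .
qed simp

lemma herm_spec:
  fixes A :: "complex mat"
  assumes A: "A \<in> carrier_mat n n" and h: "hermitian A"
  shows "\<exists>us es. orthonormal n us \<and> length es = n \<and> (\<forall>k<n. A *\<^sub>v (us ! k) = es ! k \<cdot>\<^sub>v us ! k)
     \<and> proots (char_poly A) = mset es \<and> (\<forall>k<n. cnj (es ! k) = es ! k)"
proof -
  obtain us es where o: "orthonormal n us" and l: "length es = n" and ev: "\<forall>k<n. A *\<^sub>v (us ! k) = es ! k \<cdot>\<^sub>v us ! k"
    and cp: "char_poly A = (\<Prod>e\<leftarrow>es. [:- e, 1:])" using spectral[OF A h] by blast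
  have r: "\<forall>k<n. cnj (es ! k) = es ! k"
  proof (intro allI impI)
    fix k assume k: "k < n"
    have uk: "us ! k \<in> carrier_vec n" and u1: "us ! k \<bullet>c us ! k = 1" using o k unfolding orthonormal_def by auto
    have "us ! k \<noteq> 0\<^sub>v n" using u1 by auto
    then show "cnj (es ! k) = es ! k" using herm_eigen_real[OF A h uk] ev k by blast
  qed
  show ?thesis using o l ev r cp proots_linear_prod by metis
qed

lemma cnj_mult_self: "(c::complex) * cnj c = complex_of_real ((cmod c)\<^sup>2)"
  using complex_norm_square[of c] by simp

lemma RQ_le:
  fixes A :: "complex mat"
  assumes o: "orthonormal n us" and A: "A \<in> carrier_mat n n" and es: "length es = n"
    and ev: "\<forall>k<n. A *\<^sub>v (us ! k) = es ! k \<cdot>\<^sub>v us ! k" and r: "\<forall>k<n. cnj (es ! k) = es ! k"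
    and x: "x \<in> carrier_vec n"
    and z: "\<forall>k<n. Re (es ! k) > t \<longrightarrow> x \<bullet>c us ! k = 0"
  shows "Re ((A *\<^sub>v x) \<bullet>c x) \<le> t * Re (x \<bullet>c x)"
proof -
  have "Re ((A *\<^sub>v x) \<bullet>c x) = (\<Sum>k<n. Re (es ! k) * (cmod (x \<bullet>c us ! k))\<^sup>2)"
    using expand(2)[OF o A es ev x] by (simp add: cnj_mult_self Re_sum)
  also have "\<dots> \<le> (\<Sum>k<n. t * (cmod (x \<bullet>c us ! k))\<^sup>2)"
  proof (rule sum_mono)
    fix k assume k: "k \<in> {..<n}"
    show "Re (es ! k) * (cmod (x \<bullet>c us ! k))\<^sup>2 \<le> t * (cmod (x \<bullet>c us ! k))\<^sup>2"
    proof (cases "Re (es ! k) > t")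
      case True then show ?thesis using z k by simp
    next
      case False then show ?thesis by (intro mult_right_mono, auto)
    qed
  qed
  also have "\<dots> = t * Re (x \<bullet>c x)"
    using expand(1)[OF o A es ev x] by (simp add: cnj_mult_self Re_sum sum_distrib_left)
  finally show ?thesis .
qed

lemma RQ_gt:
  fixes A :: "complex mat"
  assumes o: "orthonormal n us" and A: "A \<in> carrier_mat n n" and es: "length es = n"
    and ev: "\<forall>k<n. A *\<^sub>v (us ! k) = es ! k \<cdot>\<^sub>v us ! k" and r: "\<forall>k<n. cnj (es ! k) = es ! k"
    and x: "x \<in> carrier_vec n" and x0: "x \<noteq> 0\<^sub>v n"
    and z: "\<forall>k<n. x \<bullet>c us ! k \<noteq> 0 \<longrightarrow> Re (es ! k) > t"
  shows "Re ((A *\<^sub>v x) \<bullet>c x) > t * Re (x \<bullet>c x)"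
proof -
  have xx: "Re (x \<bullet>c x) = (\<Sum>k<n. (cmod (x \<bullet>c us ! k))\<^sup>2)"
    using expand(1)[OF o A es ev x] by (simp add: cnj_mult_self Re_sum)
  have "Re (x \<bullet>c x) > 0" using cscalar_pos[OF x x0] .
  then obtain k0 where k0: "k0 < n" "x \<bullet>c us ! k0 \<noteq> 0"
    unfolding xx by (metis (no_types, lifting) lessThan_iff norm_zero power_zero_numeral sum.neutral less_irrefl)
  have "t * Re (x \<bullet>c x) = (\<Sum>k<n. t * (cmod (x \<bullet>c us ! k))\<^sup>2)"
    unfolding xx by (simp add: sum_distrib_left)
  also have "\<dots> < (\<Sum>k<n. Re (es ! k) * (cmod (x \<bullet>c us ! k))\<^sup>2)"
  proof (rule sum_strict_mono_ex1)
    show "finite {..<n}" by simp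
    show "\<forall>k\<in>{..<n}. t * (cmod (x \<bullet>c us ! k))\<^sup>2 \<le> Re (es ! k) * (cmod (x \<bullet>c us ! k))\<^sup>2"
    proof
      fix k assume k: "k \<in> {..<n}"
      show "t * (cmod (x \<bullet>c us ! k))\<^sup>2 \<le> Re (es ! k) * (cmod (x \<bullet>c us ! k))\<^sup>2"
      proof (cases "x \<bullet>c us ! k = 0")
        case True then show ?thesis by simp
      next
        case False then show ?thesis using z k by (intro mult_right_mono, auto)
      qed
    qed
    show "\<exists>k\<in>{..<n}. t * (cmod (x \<bullet>c us ! k))\<^sup>2 < Re (es ! k) * (cmod (x \<bullet>c us ! k))\<^sup>2"
      using k0 z by (intro bexI[of _ k0], auto)
  qed
  also have "\<dots> = Re ((A *\<^sub>v x) \<bullet>c x)"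
    using expand(2)[OF o A es ev x] by (simp add: cnj_mult_self Re_sum)
  finally show ?thesis .
qed


lemma lin_cscalar: fixes u v w :: "complex vec"
  assumes "u \<in> carrier_vec n" "v \<in> carrier_vec n" "w \<in> carrier_vec n"
  shows "(a \<cdot>\<^sub>v u + b \<cdot>\<^sub>v v) \<bullet>c w = a * (u \<bullet>c w) + b * (v \<bullet>c w)"
  using assms by (simp add: add_scalar_prod_distrib[of _ n])

lemma count_filter_mset: "size (filter_mset P (mset es)) = card {k. k < length es \<and> P (es ! k)}"
  by (metis length_filter_conv_card mset_filter size_mset)

lemma rayleigh:
  fixes A :: "complex mat"
  assumes A: "A \<in> carrier_mat n n" and h: "hermitian A" and x: "x \<in> carrier_vec n" and x0: "x \<noteq> 0\<^sub>v n"
  shows "\<exists>lam. lam \<in># proots (char_poly A) \<and> Im lam = 0 \<and> Re ((A *\<^sub>v x) \<bullet>c x) \<le> Re lam * Re (x \<bullet>c x)"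
proof -
  obtain us es where o: "orthonormal n us" and l: "length es = n" and ev: "\<forall>k<n. A *\<^sub>v (us ! k) = es ! k \<cdot>\<^sub>v us ! k"
    and cp: "proots (char_poly A) = mset es" and r: "\<forall>k<n. cnj (es ! k) = es ! k"
    using herm_spec[OF A h] by blast
  have n: "n > 0" using x x0 by (cases n, auto)
  define S where "S = (\<lambda>k. Re (es ! k)) ` {..<n}"
  have fS: "finite S" "S \<noteq> {}" unfolding S_def using n by auto
  define t where "t = Max S"
  obtain k0 where k0: "k0 < n" "Re (es ! k0) = t" using Max_in[OF fS] unfolding t_def S_def by auto
  have le: "\<forall>k<n. Re (es ! k) \<le> t" unfolding t_def S_def using fS(1) S_def by auto
  have "Re ((A *\<^sub>v x) \<bullet>c x) \<le> t * Re (x \<bullet>c x)"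
    by (rule RQ_le[OF o A l ev r x], insert le, auto simp: not_less[symmetric])
  moreover have "es ! k0 \<in># proots (char_poly A)" unfolding cp using k0 l by simp
  moreover have "Im (es ! k0) = 0" using r k0 by (metis cnj.simps(2) neg_equal_zero)
  ultimately show ?thesis using k0 by metis
qed

lemma count_le1:
  fixes A :: "complex mat"
  assumes A: "A \<in> carrier_mat n n" and h: "hermitian A" and n: "0 < n"
    and hyp: "\<forall>x\<in>carrier_vec n. x $ 0 = 0 \<longrightarrow> Re ((A *\<^sub>v x) \<bullet>c x) \<le> t * Re (x \<bullet>c x)"
  shows "size (filter_mset (\<lambda>lam. t < Re lam) (proots (char_poly A))) \<le> 1"
proof (rule ccontr)
  obtain us es where o: "orthonormal n us" and l: "length es = n" and ev: "\<forall>k<n. A *\<^sub>v (us ! k) = es ! k \<cdot>\<^sub>v us ! k"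
    and cp: "proots (char_poly A) = mset es" and r: "\<forall>k<n. cnj (es ! k) = es ! k"
    using herm_spec[OF A h] by blast
  have ul: "length us = n" and uc: "set us \<subseteq> carrier_vec n"
    and un: "\<And>i j. i < n \<Longrightarrow> j < n \<Longrightarrow> us ! i \<bullet>c us ! j = (if i = j then 1 else 0)"
    using o unfolding orthonormal_def by auto
  define K where "K = {k. k < n \<and> t < Re (es ! k)}"
  assume "\<not> ?thesis"
  then have "\<not> card K \<le> Suc 0" unfolding cp count_filter_mset K_def l by simp
  moreover have "finite K" unfolding K_def by simp
  ultimately obtain k1 k2 where k: "k1 \<in> K" "k2 \<in> K" "k1 \<noteq> k2" using card_le_Suc0_iff_eq by blast
  have k1: "k1 < n" "t < Re (es ! k1)" and k2: "k2 < n" "t < Re (es ! k2)" using k unfolding K_def by auto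
  have u1: "us ! k1 \<in> carrier_vec n" and u2: "us ! k2 \<in> carrier_vec n" using k1 k2 ul uc by auto
  define b1 where "b1 = us ! k2 $ 0"
  define b2 where "b2 = - (us ! k1 $ 0)"
  obtain x :: "complex vec" where xc: "x \<in> carrier_vec n" and x0: "x $ 0 = 0" and xnz: "x \<noteq> 0\<^sub>v n"
    and xk: "\<forall>k<n. x \<bullet>c us ! k \<noteq> 0 \<longrightarrow> k = k1 \<or> k = k2"
  proof (cases "b1 = 0 \<and> b2 = 0")
    case True
    show ?thesis
    proof (rule that[of "us ! k1"])
      show "us ! k1 \<in> carrier_vec n" by (rule u1)
      show "us ! k1 $ 0 = 0" using True unfolding b2_def by simp
      show "us ! k1 \<noteq> 0\<^sub>v n" using un[OF k1(1) k1(1)] by auto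
      show "\<forall>k<n. us ! k1 \<bullet>c us ! k \<noteq> 0 \<longrightarrow> k = k1 \<or> k = k2" using un k1 by auto
    qed
  next
    case False
    define y where "y = b1 \<cdot>\<^sub>v us ! k1 + b2 \<cdot>\<^sub>v us ! k2"
    have yc: "y \<in> carrier_vec n" unfolding y_def using u1 u2 by simp
    have yk: "\<And>k. k < n \<Longrightarrow> y \<bullet>c us ! k = b1 * (if k1 = k then 1 else 0) + b2 * (if k2 = k then 1 else 0)"
    proof -
      fix k assume kn: "k < n"
      then have "us ! k \<in> carrier_vec n" using ul uc by auto
      then show "y \<bullet>c us ! k = b1 * (if k1 = k then 1 else 0) + b2 * (if k2 = k then 1 else 0)"
        unfolding y_def using lin_cscalar[OF u1 u2] un[OF k1(1) kn] un[OF k2(1) kn] by simp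
    qed
    show ?thesis
    proof (rule that[of y])
      show "y \<in> carrier_vec n" by (rule yc)
      show "y $ 0 = 0" unfolding y_def b1_def b2_def using u1 u2 n by simp
      show "y \<noteq> 0\<^sub>v n"
      proof
        assume "y = 0\<^sub>v n"
        then have "y \<bullet>c us ! k1 = 0" "y \<bullet>c us ! k2 = 0" using u1 u2 by auto
        then show False using yk[OF k1(1)] yk[OF k2(1)] k(3) False by auto
      qed
      show "\<forall>k<n. y \<bullet>c us ! k \<noteq> 0 \<longrightarrow> k = k1 \<or> k = k2"
      proof (intro allI impI)
        fix k assume "k < n" "y \<bullet>c us ! k \<noteq> 0"
        then show "k = k1 \<or> k = k2" using yk[of k] by (cases "k = k1"; cases "k = k2"; simp)
      qed
    qed
  qed
  have "Re ((A *\<^sub>v x) \<bullet>c x) > t * Re (x \<bullet>c x)"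
  proof (rule RQ_gt[OF o A l ev r xc xnz], intro allI impI)
    fix k assume "k < n" "x \<bullet>c us ! k \<noteq> 0"
    then have "k = k1 \<or> k = k2" using xk by blast
    then show "t < Re (es ! k)" using k1 k2 by auto
  qed
  moreover have "Re ((A *\<^sub>v x) \<bullet>c x) \<le> t * Re (x \<bullet>c x)" using hyp xc x0 by simp
  ultimately show False by linarith
qed

lemma two_vectors:
  fixes A :: "complex mat"
  assumes A: "A \<in> carrier_mat n n" and h: "hermitian A"
    and cnt: "size (filter_mset (\<lambda>lam. t < Re lam) (proots (char_poly A))) \<le> 1"
    and a: "a \<in> carrier_vec n" and b: "b \<in> carrier_vec n"
  shows "\<exists>\<alpha> \<beta>. (\<alpha> \<noteq> 0 \<or> \<beta> \<noteq> 0) \<and>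
    Re ((A *\<^sub>v (\<alpha> \<cdot>\<^sub>v a + \<beta> \<cdot>\<^sub>v b)) \<bullet>c (\<alpha> \<cdot>\<^sub>v a + \<beta> \<cdot>\<^sub>v b)) \<le> t * Re ((\<alpha> \<cdot>\<^sub>v a + \<beta> \<cdot>\<^sub>v b) \<bullet>c (\<alpha> \<cdot>\<^sub>v a + \<beta> \<cdot>\<^sub>v b))"
proof -
  obtain us es where o: "orthonormal n us" and l: "length es = n" and ev: "\<forall>k<n. A *\<^sub>v (us ! k) = es ! k \<cdot>\<^sub>v us ! k"
    and cp: "proots (char_poly A) = mset es" and r: "\<forall>k<n. cnj (es ! k) = es ! k"
    using herm_spec[OF A h] by blast
  have ul: "length us = n" and uc: "set us \<subseteq> carrier_vec n"
    using o unfolding orthonormal_def by auto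
  define K where "K = {k. k < n \<and> t < Re (es ! k)}"
  have cK: "card K \<le> Suc 0" using cnt unfolding cp count_filter_mset K_def l by simp
  have fK: "finite K" unfolding K_def by simp
  show ?thesis
  proof (cases "K = {}")
    case True
    have "Re ((A *\<^sub>v (1 \<cdot>\<^sub>v a + 0 \<cdot>\<^sub>v b)) \<bullet>c (1 \<cdot>\<^sub>v a + 0 \<cdot>\<^sub>v b)) \<le> t * Re ((1 \<cdot>\<^sub>v a + 0 \<cdot>\<^sub>v b) \<bullet>c (1 \<cdot>\<^sub>v a + 0 \<cdot>\<^sub>v b))"
    proof (rule RQ_le[OF o A l ev r])
      show "1 \<cdot>\<^sub>v a + 0 \<cdot>\<^sub>v b \<in> carrier_vec n" using a b by simp
      show "\<forall>k<n. t < Re (es ! k) \<longrightarrow> (1 \<cdot>\<^sub>v a + 0 \<cdot>\<^sub>v b) \<bullet>c us ! k = 0"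
        using True unfolding K_def by auto
    qed
    then show ?thesis by (intro exI[of _ "1::complex"] exI[of _ "0::complex"] conjI, simp, assumption)
  next
    case False
    then obtain k0 where k0K: "k0 \<in> K" by blast
    have "\<forall>x\<in>K. \<forall>y\<in>K. x = y" using cK card_le_Suc0_iff_eq[OF fK] by simp
    then have Kk0: "K = {k0}" using k0K by auto
    have k0: "k0 < n" using k0K unfolding K_def by auto
    have u: "us ! k0 \<in> carrier_vec n" using k0 ul uc by auto
    define a0 where "a0 = b \<bullet>c us ! k0"
    define b0 where "b0 = - (a \<bullet>c us ! k0)"
    obtain \<alpha> \<beta> where ab: "\<alpha> \<noteq> 0 \<or> \<beta> \<noteq> 0" and orth: "(\<alpha> \<cdot>\<^sub>v a + \<beta> \<cdot>\<^sub>v b) \<bullet>c us ! k0 = 0"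
    proof (cases "a0 = 0 \<and> b0 = 0")
      case True
      show ?thesis by (rule that[of 1 0], insert True lin_cscalar[OF a b u, of 1 0], auto simp: b0_def)
    next
      case False
      have "(a0 \<cdot>\<^sub>v a + b0 \<cdot>\<^sub>v b) \<bullet>c us ! k0 = a0 * (a \<bullet>c us ! k0) + b0 * (b \<bullet>c us ! k0)"
        by (rule lin_cscalar[OF a b u])
      also have "\<dots> = 0" unfolding a0_def b0_def by (simp add: algebra_simps)
      finally have "(a0 \<cdot>\<^sub>v a + b0 \<cdot>\<^sub>v b) \<bullet>c us ! k0 = 0" .
      moreover have "a0 \<noteq> 0 \<or> b0 \<noteq> 0" using False by simp
      ultimately show ?thesis using that by blast
    qed
    define x where "x = \<alpha> \<cdot>\<^sub>v a + \<beta> \<cdot>\<^sub>v b"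
    have "Re ((A *\<^sub>v x) \<bullet>c x) \<le> t * Re (x \<bullet>c x)"
    proof (rule RQ_le[OF o A l ev r])
      show "x \<in> carrier_vec n" unfolding x_def using a b by simp
      show "\<forall>k<n. t < Re (es ! k) \<longrightarrow> x \<bullet>c us ! k = 0"
      proof (intro allI impI)
        fix k assume "k < n" "t < Re (es ! k)"
        then have "k \<in> K" unfolding K_def by simp
        then have "k = k0" using Kk0 by simp
        then show "x \<bullet>c us ! k = 0" using orth unfolding x_def by simp
      qed
    qed
    then show ?thesis using ab unfolding x_def by (intro exI[of _ \<alpha>] exI[of _ \<beta>] conjI)
  qed
qed


lemma sum_take_mono: "a \<le> b \<Longrightarrow> sum_list (take a s) \<le> sum_list (take b (s :: nat list))"
proof -
  assume ab: "a \<le> b"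
  have "take b s = take a s @ take (b - a) (drop a s)" using ab take_add[of a "b - a" s] by simp
  then show ?thesis by simp
qed

lemma sum_take_Suc: "k < length s \<Longrightarrow> sum_list (take (Suc k) s) = sum_list (take k s) + s ! (k :: nat)"
  by (simp add: take_Suc_conv_app_nth)

lemma block_unique:
  fixes s :: "nat list"
  assumes k: "k < length s" and k': "k' < length s"
    and u1: "sum_list (take k s) \<le> u" "u < sum_list (take k s) + s ! k"
    and u2: "sum_list (take k' s) \<le> u" "u < sum_list (take k' s) + s ! k'"
  shows "k = k'"
proof (rule ccontr)
  assume "k \<noteq> k'"
  then consider "k < k'" | "k' < k" by linarith
  then show False
  proof cases
    case 1
    then have "sum_list (take (Suc k) s) \<le> sum_list (take k' s)" by (intro sum_take_mono) simp
    then show False using sum_take_Suc[OF k] u1 u2 by linarith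
  next
    case 2
    then have "sum_list (take (Suc k') s) \<le> sum_list (take k s)" by (intro sum_take_mono) simp
    then show False using sum_take_Suc[OF k'] u1 u2 by linarith
  qed
qed

lemma block_le_total: "k < length s \<Longrightarrow> sum_list (take k s) + s ! k \<le> sum_list (s :: nat list)"
  using sum_take_mono[of "Suc k" "length s" s] sum_take_Suc[of k s] by simp

lemma mod_pred_aux:
  assumes "b < (c::nat)" "a = (b + 1) mod c"
  shows "b = (a + c - 1) mod c"
proof (cases "b + 1 < c")
  case True
  then have "a = b + 1" using assms by simp
  then show ?thesis using assms by simp
next
  case False
  then have "b + 1 = c" using assms by simp
  then have "a = 0" using assms by simp
  then show ?thesis using \<open>b + 1 = c\<close> assms by simp
qed

lemma cycles_nbr:
  assumes "cycles_adj s u v"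
  shows "\<exists>k<length s. sum_list (take k s) \<le> u \<and> u < sum_list (take k s) + s ! k \<and>
    (v = sum_list (take k s) + (u - sum_list (take k s) + 1) mod (s ! k) \<or>
     v = sum_list (take k s) + (u - sum_list (take k s) + s ! k - 1) mod (s ! k))"
proof -
  obtain k where k: "k < length s" and
    h: "sum_list (take k s) \<le> u" "u < sum_list (take k s) + s ! k"
       "sum_list (take k s) \<le> v" "v < sum_list (take k s) + s ! k"
       "v - sum_list (take k s) = (u - sum_list (take k s) + 1) mod (s ! k) \<or>
        u - sum_list (take k s) = (v - sum_list (take k s) + 1) mod (s ! k)"
    using assms unfolding cycles_adj_def Let_def by blast
  define off where "off = sum_list (take k s)"
  define c where "c = s ! k"
  have h': "off \<le> u" "u < off + c" "off \<le> v" "v < off + c"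
     "v - off = (u - off + 1) mod c \<or> u - off = (v - off + 1) mod c" using h unfolding off_def c_def by auto
  have "v = off + (u - off + 1) mod c \<or> v = off + (u - off + c - 1) mod c"
  proof (cases "v - off = (u - off + 1) mod c")
    case True then show ?thesis using h'(3) by (metis le_add_diff_inverse)
  next
    case False
    then have "u - off = (v - off + 1) mod c" using h' by simp
    then have "v - off = (u - off + c - 1) mod c" by (intro mod_pred_aux, insert h', auto)
    then show ?thesis using h'(3) by (metis le_add_diff_inverse)
  qed
  then show ?thesis using k h unfolding off_def c_def by blast
qed

lemma G_simple: "simple_graph (G_order s q) (G_adj s q)"
  unfolding simple_graph_def G_adj_def cycles_adj_def matching_adj_def Let_def
  by (intro conjI allI impI; (elim conjE)?; auto)

lemma G_0: "0 < i \<Longrightarrow> i < G_order s q \<Longrightarrow> G_adj s q 0 i \<and> G_adj s q i 0"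
  unfolding G_adj_def by auto

lemma deg_G_0: "deg (G_order s q) (G_adj s q) 0 = G_order s q - 1"
proof -
  have "{j. j < G_order s q \<and> G_adj s q 0 j} = {1..<G_order s q}"
    unfolding G_adj_def by (auto simp: G_order_def)
  then show ?thesis unfolding deg_def by simp
qed

lemma deg_G_le3:
  assumes i: "1 \<le> i" "i < G_order s q"
  shows "deg (G_order s q) (G_adj s q) i \<le> 3"
proof -
  define n where "n = G_order s q"
  define u where "u = i - 1"
  define off where "off = (\<lambda>k. sum_list (take k s))"
  define B where "B = {k. k < length s \<and> off k \<le> u \<and> u < off k + s ! k}"
  define f where "f = (\<lambda>k. 1 + (off k + (u - off k + 1) mod (s ! k)))"
  define g where "g = (\<lambda>k. 1 + (off k + (u - off k + s ! k - 1) mod (s ! k)))"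
  define a where "a = sum_list s"
  define M where "M = (if a \<le> u then {1 + (a + 2 * ((u - a) div 2)), 1 + (a + 2 * ((u - a) div 2) + 1)} else {})"
  have sub: "{j. j < n \<and> G_adj s q i j} \<subseteq> {0} \<union> f ` B \<union> g ` B \<union> M"
  proof
    fix j assume "j \<in> {j. j < n \<and> G_adj s q i j}"
    then have j: "j < n" and G: "G_adj s q i j" by auto
    show "j \<in> {0} \<union> f ` B \<union> g ` B \<union> M"
    proof (cases "j = 0")
      case True then show ?thesis by simp
    next
      case False
      then have j1: "j \<ge> 1" by simp
      have alt: "cycles_adj s u (j - 1) \<or> matching_adj a q u (j - 1)"
        using G False i unfolding G_adj_def u_def a_def by auto
      then show ?thesis
      proof
        assume "cycles_adj s u (j - 1)"
        from cycles_nbr[OF this] obtain k where k: "k < length s" "off k \<le> u" "u < off k + s ! k"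
          "j - 1 = off k + (u - off k + 1) mod (s ! k) \<or> j - 1 = off k + (u - off k + s ! k - 1) mod (s ! k)"
          unfolding off_def by blast
        then have kB: "k \<in> B" unfolding B_def by simp
        from k(4) have "j = f k \<or> j = g k" unfolding f_def g_def using j1 by auto
        then show ?thesis using kB by auto
      next
        assume m: "matching_adj a q u (j - 1)"
        then have au: "a \<le> u" and aj: "a \<le> j - 1" and d: "(u - a) div 2 = (j - 1 - a) div 2"
          unfolding matching_adj_def by auto
        have "j - 1 - a = 2 * ((u - a) div 2) \<or> j - 1 - a = 2 * ((u - a) div 2) + 1"
          using d by presburger
        then have "j = 1 + (a + 2 * ((u - a) div 2)) \<or> j = 1 + (a + 2 * ((u - a) div 2) + 1)"
          using aj j1 by auto
        then show ?thesis unfolding M_def using au by auto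
      qed
    qed
  qed
  have cB: "card B \<le> 1"
  proof -
    have "finite B" unfolding B_def by simp
    moreover have "\<forall>x\<in>B. \<forall>y\<in>B. x = y"
      unfolding B_def off_def using block_unique by blast
    ultimately show ?thesis using card_le_Suc0_iff_eq by auto
  qed
  have fin: "finite B" "finite M" unfolding B_def M_def by auto
  have "card ({0} \<union> f ` B \<union> g ` B \<union> M) \<le> card ({0} \<union> f ` B \<union> g ` B) + card M"
    by (rule card_Un_le)
  also have "card ({0} \<union> f ` B \<union> g ` B) \<le> card ({0} \<union> f ` B) + card (g ` B)" by (rule card_Un_le)
  also have "card ({0} \<union> f ` B) \<le> card {0::nat} + card (f ` B)" by (rule card_Un_le)
  finally have c1: "card ({0} \<union> f ` B \<union> g ` B \<union> M) \<le> 1 + card (f ` B) + card (g ` B) + card M" by simp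
  have c2: "card (f ` B) \<le> card B" "card (g ` B) \<le> card B" by (auto intro: card_image_le fin)
  have c3: "card M \<le> 2" unfolding M_def by (auto simp: card_insert_le_m1)
  have c4: "a \<le> u \<Longrightarrow> B = {}"
  proof -
    assume au: "a \<le> u"
    show "B = {}"
    proof (rule ccontr)
      assume "B \<noteq> {}"
      then obtain k where "k \<in> B" by blast
      then have "k < length s" "u < off k + s ! k" unfolding B_def by auto
      then show False using block_le_total[of k s] au unfolding a_def off_def by simp
    qed
  qed
  have "card ({0} \<union> f ` B \<union> g ` B \<union> M) \<le> 3"
  proof (cases "a \<le> u")
    case True then show ?thesis using c1 c3 c4 by simp
  next
    case False then show ?thesis using c1 c2 cB unfolding M_def by simp
  qed
  moreover have "card {j. j < n \<and> G_adj s q i j} \<le> card ({0} \<union> f ` B \<union> g ` B \<union> M)"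
    by (rule card_mono[OF _ sub], insert fin, auto)
  ultimately show ?thesis unfolding deg_def n_def by simp
qed


lemma Q_carrier[simp]: "Q_matrix n E \<in> carrier_mat n n"
  unfolding Q_matrix_def by simp

lemma Q_dims[simp]: "dim_row (Q_matrix n E) = n" "dim_col (Q_matrix n E) = n"
  unfolding Q_matrix_def by auto

lemma Q_entry: "i < n \<Longrightarrow> j < n \<Longrightarrow> Q_matrix n E $$ (i,j) =
   (if E i j then 1 else 0) + (if i = j then of_nat (deg n E i) else 0)"
  unfolding Q_matrix_def by simp

lemma Q_herm: assumes "simple_graph n E" shows "hermitian (Q_matrix n E)"
  unfolding hermitian_def using assms unfolding simple_graph_def
  by (auto simp: Q_entry)

lemma Q_size: "size (Q_spectrum n E) = n"
proof -
  obtain as where "char_poly (Q_matrix n E) = (\<Prod>a\<leftarrow>as. [:- a, 1:])" "length as = n"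
    using char_poly_factorized[OF Q_carrier] by blast
  then show ?thesis unfolding Q_spectrum_def using proots_linear_prod by simp
qed

lemma qf_sum: fixes A :: "complex mat"
  assumes A: "A \<in> carrier_mat n n" and x: "x \<in> carrier_vec n"
  shows "(A *\<^sub>v x) \<bullet>c x = (\<Sum>a<n. \<Sum>b<n. A $$ (a,b) * x $ b * cnj (x $ a))"
  using A x by (subst cscalar_sum[of _ n], auto simp: row_sum[OF A x] sum_distrib_right)

definition nbrs :: "nat \<Rightarrow> (nat \<Rightarrow> nat \<Rightarrow> bool) \<Rightarrow> nat \<Rightarrow> nat set" where
  "nbrs n E i = {j. j < n \<and> E i j}"

lemma deg_nbrs: "deg n E i = card (nbrs n E i)" unfolding deg_def nbrs_def by simp

lemma Q_row: fixes y :: "complex vec"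
  assumes y: "y \<in> carrier_vec n" and i: "i < n" and sg: "simple_graph n E"
  shows "(Q_matrix n E *\<^sub>v y) $ i = of_nat (deg n E i) * y $ i + (\<Sum>j\<in>nbrs n E i. y $ j)"
proof -
  have "(Q_matrix n E *\<^sub>v y) $ i = (\<Sum>b<n. ((if E i b then 1 else 0) + (if i = b then of_nat (deg n E i) else 0)) * y $ b)"
    using y i by (simp add: row_sum[OF Q_carrier y] Q_entry)
  also have "\<dots> = (\<Sum>b<n. (if E i b then y $ b else 0) + (if i = b then of_nat (deg n E i) * y $ b else 0))"
    by (intro sum.cong refl) (simp add: distrib_right)
  also have "\<dots> = (\<Sum>b<n. (if E i b then y $ b else 0)) + (\<Sum>b<n. (if i = b then of_nat (deg n E i) * y $ b else 0))"
    by (rule sum.distrib)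
  also have "(\<Sum>b<n. (if i = b then of_nat (deg n E i) * y $ b else 0)) = of_nat (deg n E i) * y $ i"
    using i by simp
  also have "(\<Sum>b<n. (if E i b then y $ b else 0)) = (\<Sum>j\<in>nbrs n E i. y $ j)"
    unfolding nbrs_def by (simp add: sum.If_cases Collect_conj_eq lessThan_def Int_commute)
  finally show ?thesis by simp
qed

lemma sum_two: fixes f :: "nat \<Rightarrow> complex"
  assumes "u < n" "w < n" "u \<noteq> w"
  shows "(\<Sum>b<n. f b * ((if b = u then \<alpha> else 0) + (if b = w then \<beta> else 0))) = f u * \<alpha> + f w * \<beta>"
proof -
  have "(\<Sum>b<n. f b * ((if b = u then \<alpha> else 0) + (if b = w then \<beta> else 0)))
     = (\<Sum>b<n. (if b = u then f b * \<alpha> else 0) + (if b = w then f b * \<beta> else 0))"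
    by (intro sum.cong refl) (simp add: distrib_left)
  also have "\<dots> = (\<Sum>b<n. (if b = u then f b * \<alpha> else 0)) + (\<Sum>b<n. (if b = w then f b * \<beta> else 0))"
    by (rule sum.distrib)
  also have "\<dots> = f u * \<alpha> + f w * \<beta>" using assms by simp
  finally show ?thesis .
qed

lemma pair_vec: fixes \<alpha> \<beta> :: complex
  assumes "b < n"
  shows "(\<alpha> \<cdot>\<^sub>v unit_vec n u + \<beta> \<cdot>\<^sub>v unit_vec n w) $ b = (if b = u then \<alpha> else 0) + (if b = w then \<beta> else 0)"
  using assms by (simp add: unit_vec_def)

lemma qf_pair: fixes A :: "complex mat" and \<alpha> \<beta> :: complex
  assumes A: "A \<in> carrier_mat n n" and uw: "u < n" "w < n" "u \<noteq> w"
  defines "x \<equiv> \<alpha> \<cdot>\<^sub>v unit_vec n u + \<beta> \<cdot>\<^sub>v unit_vec n w"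
  shows "(A *\<^sub>v x) \<bullet>c x = \<alpha> * cnj \<alpha> * A $$ (u,u) + \<beta> * cnj \<alpha> * A $$ (u,w) + \<alpha> * cnj \<beta> * A $$ (w,u) + \<beta> * cnj \<beta> * A $$ (w,w)"
    "x \<bullet>c x = \<alpha> * cnj \<alpha> + \<beta> * cnj \<beta>"
proof -
  have xc: "x \<in> carrier_vec n" unfolding x_def by simp
  have xb: "\<And>b. b < n \<Longrightarrow> x $ b = (if b = u then \<alpha> else 0) + (if b = w then \<beta> else 0)"
    unfolding x_def by (rule pair_vec)
  have inner: "\<And>a. (\<Sum>b<n. A $$ (a,b) * x $ b * cnj (x $ a)) = (A $$ (a,u) * \<alpha> + A $$ (a,w) * \<beta>) * cnj (x $ a)"
  proof -
    fix a
    have "(\<Sum>b<n. A $$ (a,b) * x $ b * cnj (x $ a)) = (\<Sum>b<n. A $$ (a,b) * x $ b) * cnj (x $ a)"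
      by (simp add: sum_distrib_right)
    also have "(\<Sum>b<n. A $$ (a,b) * x $ b) = (\<Sum>b<n. A $$ (a,b) * ((if b = u then \<alpha> else 0) + (if b = w then \<beta> else 0)))"
      by (intro sum.cong refl, simp add: xb)
    also have "\<dots> = A $$ (a,u) * \<alpha> + A $$ (a,w) * \<beta>" by (rule sum_two[OF uw])
    finally show "(\<Sum>b<n. A $$ (a,b) * x $ b * cnj (x $ a)) = (A $$ (a,u) * \<alpha> + A $$ (a,w) * \<beta>) * cnj (x $ a)" .
  qed
  have "(A *\<^sub>v x) \<bullet>c x = (\<Sum>a<n. (A $$ (a,u) * \<alpha> + A $$ (a,w) * \<beta>) * cnj (x $ a))"
    by (simp add: qf_sum[OF A xc] inner)
  also have "\<dots> = (\<Sum>a<n. (A $$ (a,u) * \<alpha> + A $$ (a,w) * \<beta>) * ((if a = u then cnj \<alpha> else 0) + (if a = w then cnj \<beta> else 0)))"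
    by (intro sum.cong refl, simp add: xb)
  also have "\<dots> = (A $$ (u,u) * \<alpha> + A $$ (u,w) * \<beta>) * cnj \<alpha> + (A $$ (w,u) * \<alpha> + A $$ (w,w) * \<beta>) * cnj \<beta>"
    by (rule sum_two[OF uw])
  finally show "(A *\<^sub>v x) \<bullet>c x = \<alpha> * cnj \<alpha> * A $$ (u,u) + \<beta> * cnj \<alpha> * A $$ (u,w) + \<alpha> * cnj \<beta> * A $$ (w,u) + \<beta> * cnj \<beta> * A $$ (w,w)"
    by (simp add: algebra_simps)
  have "x \<bullet>c x = (\<Sum>a<n. x $ a * cnj (x $ a))" by (rule cscalar_sum[OF xc xc])
  also have "\<dots> = (\<Sum>a<n. cnj (x $ a) * ((if a = u then \<alpha> else 0) + (if a = w then \<beta> else 0)))"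
    by (intro sum.cong refl, simp add: xb mult.commute)
  also have "\<dots> = cnj (x $ u) * \<alpha> + cnj (x $ w) * \<beta>" by (rule sum_two[OF uw])
  finally show "x \<bullet>c x = \<alpha> * cnj \<alpha> + \<beta> * cnj \<beta>" using xb uw by (simp add: mult.commute)
qed

lemma two_big_deg:
  fixes \<alpha> \<beta> :: complex
  assumes sg: "simple_graph n E" and uw: "u < n" "w < n" "u \<noteq> w"
    and du: "deg n E u \<ge> 7" and dw: "deg n E w \<ge> 7" and ab: "\<alpha> \<noteq> 0 \<or> \<beta> \<noteq> 0"
  defines "x \<equiv> \<alpha> \<cdot>\<^sub>v unit_vec n u + \<beta> \<cdot>\<^sub>v unit_vec n w"
  shows "Re ((Q_matrix n E *\<^sub>v x) \<bullet>c x) > 5 * Re (x \<bullet>c x)"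
proof -
  let ?Q = "Q_matrix n E"
  have sym: "E u w = E w u" using sg unfolding simple_graph_def by blast
  define c :: real where "c = (if E u w then 1 else 0)"
  have Quu: "?Q $$ (u,u) = of_nat (deg n E u)" using uw sg unfolding simple_graph_def by (simp add: Q_entry)
  have Qww: "?Q $$ (w,w) = of_nat (deg n E w)" using uw sg unfolding simple_graph_def by (simp add: Q_entry)
  have Quw: "?Q $$ (u,w) = complex_of_real c" using uw unfolding c_def by (simp add: Q_entry)
  have Qwu: "?Q $$ (w,u) = complex_of_real c" using uw sym unfolding c_def by (simp add: Q_entry)
  have c01: "0 \<le> c" "c \<le> 1" unfolding c_def by auto
  define p where "p = cmod \<alpha>"
  define r where "r = cmod \<beta>"
  have aa: "\<alpha> * cnj \<alpha> = complex_of_real (p^2)" unfolding p_def by (rule cnj_mult_self)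
  have bb: "\<beta> * cnj \<beta> = complex_of_real (r^2)" unfolding r_def by (rule cnj_mult_self)
  have pos: "p^2 + r^2 > 0" using ab unfolding p_def r_def by (auto simp: add_pos_nonneg add_nonneg_pos)
  have cross: "Re (\<beta> * cnj \<alpha> + \<alpha> * cnj \<beta>) \<ge> - (p^2 + r^2)"
  proof -
    have "\<bar>Re (\<beta> * cnj \<alpha> + \<alpha> * cnj \<beta>)\<bar> \<le> cmod (\<beta> * cnj \<alpha>) + cmod (\<alpha> * cnj \<beta>)"
      by (meson abs_Re_le_cmod norm_triangle_ineq order_trans)
    also have "\<dots> = 2 * p * r" unfolding p_def r_def by (simp add: norm_mult)
    also have "\<dots> \<le> p^2 + r^2" by (simp add: sum_squares_bound)
    finally show ?thesis by linarith
  qed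
  have "Re ((?Q *\<^sub>v x) \<bullet>c x) = p^2 * deg n E u + r^2 * deg n E w + c * Re (\<beta> * cnj \<alpha> + \<alpha> * cnj \<beta>)"
    unfolding x_def qf_pair(1)[OF Q_carrier uw] Quu Qww Quw Qwu
    by (simp add: aa bb algebra_simps)
  also have "\<dots> \<ge> p^2 * 7 + r^2 * 7 - (p^2 + r^2)"
  proof -
    have "p^2 * deg n E u \<ge> p^2 * 7" using du by (intro mult_left_mono, auto)
    moreover have "r^2 * deg n E w \<ge> r^2 * 7" using dw by (intro mult_left_mono, auto)
    moreover have "c * Re (\<beta> * cnj \<alpha> + \<alpha> * cnj \<beta>) \<ge> - (p^2 + r^2)"
    proof -
      define R where "R = Re (\<beta> * cnj \<alpha> + \<alpha> * cnj \<beta>)"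
      have "c * R \<ge> - (p^2 + r^2)"
      proof (cases "R \<ge> 0")
        case True
        then have "c * R \<ge> 0" using c01 by simp
        then show ?thesis using pos by linarith
      next
        case False
        then have "(c - 1) * R \<ge> 0" using c01 by (intro mult_nonpos_nonpos, auto)
        then have "c * R \<ge> R" by (simp add: algebra_simps)
        then show ?thesis using cross unfolding R_def by linarith
      qed
      then show ?thesis unfolding R_def .
    qed
    ultimately show ?thesis by linarith
  qed
  finally have "Re ((?Q *\<^sub>v x) \<bullet>c x) \<ge> 6 * (p^2 + r^2)" by (simp add: algebra_simps)
  moreover have "Re (x \<bullet>c x) = p^2 + r^2" unfolding x_def qf_pair(2)[OF Q_carrier uw] aa bb by simp
  moreover have gen: "\<And>a b c::real. 6 * c \<le> a \<Longrightarrow> b = c \<Longrightarrow> 0 < c \<Longrightarrow> 5 * b < a" by linarith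
  ultimately show ?thesis using pos by blast
qed

lemma nbrs_sub: "simple_graph n E \<Longrightarrow> nbrs n E i \<subseteq> {..<n} - {i}"
  unfolding nbrs_def simple_graph_def by auto

lemma deg_le: "simple_graph n E \<Longrightarrow> i < n \<Longrightarrow> deg n E i \<le> n - 1"
proof -
  assume sg: "simple_graph n E" and i: "i < n"
  have "deg n E i \<le> card ({..<n} - {i})" unfolding deg_nbrs using nbrs_sub[OF sg] by (intro card_mono) auto
  then show ?thesis using i by simp
qed

lemma Re_cscalar_self: fixes x :: "complex vec" assumes "x \<in> carrier_vec n"
  shows "Re (x \<bullet>c x) = (\<Sum>a<n. (cmod (x $ a))\<^sup>2)"
  using assms by (simp add: cscalar_sum[of _ n] cnj_mult_self Re_sum)

lemma G_qf_bound:
  fixes x :: "complex vec"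
  assumes sg: "simple_graph n E" and hyp: "\<forall>a. 1 \<le> a \<and> a < n \<longrightarrow> E a 0 \<and> deg n E a \<le> 3"
    and x: "x \<in> carrier_vec n" and x0: "x $ 0 = 0"
  shows "Re ((Q_matrix n E *\<^sub>v x) \<bullet>c x) \<le> 5 * Re (x \<bullet>c x)"
proof -
  define X where "X = (\<lambda>a. (cmod (x $ a))\<^sup>2)"
  define d where "d = (\<lambda>a. real (deg n E a))"
  define w where "w = (\<lambda>a b. if E a b \<and> a \<noteq> 0 \<and> b \<noteq> 0 then (1::real) else 0)"
  have symE: "\<And>a b. E a b = E b a" using sg unfolding simple_graph_def by blast
  have irr: "\<And>a. \<not> E a a" using sg unfolding simple_graph_def by blast
  have wsym: "\<And>a b. w a b = w b a" unfolding w_def using symE by auto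
  have X0: "X 0 = 0" unfolding X_def x0 by simp
  have trm: "\<And>a b. a < n \<Longrightarrow> b < n \<Longrightarrow> Re (Q_matrix n E $$ (a,b) * x $ b * cnj (x $ a)) \<le>
      (if a = b then d a * X a else 0) + w a b * (X a + X b) / 2"
  proof -
    fix a b assume ab: "a < n" "b < n"
    show "Re (Q_matrix n E $$ (a,b) * x $ b * cnj (x $ a)) \<le> (if a = b then d a * X a else 0) + w a b * (X a + X b) / 2"
    proof (cases "a = b")
      case True
      have "Q_matrix n E $$ (a,b) * x $ b * cnj (x $ a) = of_nat (deg n E a) * (x $ a * cnj (x $ a))"
        using True ab irr by (simp add: Q_entry mult.assoc)
      also have "\<dots> = complex_of_real (d a * X a)" unfolding d_def X_def cnj_mult_self by simp
      finally show ?thesis using True irr unfolding w_def by simp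
    next
      case False
      show ?thesis
      proof (cases "E a b \<and> a \<noteq> 0 \<and> b \<noteq> 0")
        case True
        have "Re (x $ b * cnj (x $ a)) \<le> cmod (x $ b * cnj (x $ a))" by (rule complex_Re_le_cmod)
        also have "\<dots> = cmod (x $ a) * cmod (x $ b)" by (simp add: norm_mult)
        also have "\<dots> \<le> (X a + X b) / 2" unfolding X_def
          using sum_squares_bound[of "cmod (x $ a)" "cmod (x $ b)"] by (simp add: power2_eq_square)
        finally show ?thesis using ab True False unfolding w_def by (simp add: Q_entry)
      next
        case F: False
        then have "Re (Q_matrix n E $$ (a,b) * x $ b * cnj (x $ a)) = 0"
          using ab False x0 by (auto simp: Q_entry)
        moreover have "w a b = 0" using F unfolding w_def by auto
        ultimately show ?thesis using False by simp
      qed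
    qed
  qed
  have "Re ((Q_matrix n E *\<^sub>v x) \<bullet>c x) = (\<Sum>a<n. \<Sum>b<n. Re (Q_matrix n E $$ (a,b) * x $ b * cnj (x $ a)))"
    by (simp add: qf_sum[OF Q_carrier x] Re_sum)
  also have "\<dots> \<le> (\<Sum>a<n. \<Sum>b<n. (if a = b then d a * X a else 0) + w a b * (X a + X b) / 2)"
    by (intro sum_mono, rule trm, auto)
  also have "\<dots> = (\<Sum>a<n. d a * X a) + (\<Sum>a<n. \<Sum>b<n. w a b * X a) / 2 + (\<Sum>a<n. \<Sum>b<n. w a b * X b) / 2"
    by (simp add: sum.distrib sum_divide_distrib distrib_left add_divide_distrib)
  also have "(\<Sum>a<n. \<Sum>b<n. w a b * X b) = (\<Sum>a<n. \<Sum>b<n. w a b * X a)"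
    by (subst sum.swap, simp add: wsym)
  also have "(\<Sum>a<n. d a * X a) + (\<Sum>a<n. \<Sum>b<n. w a b * X a) / 2 + (\<Sum>a<n. \<Sum>b<n. w a b * X a) / 2
      = (\<Sum>a<n. (d a + (\<Sum>b<n. w a b)) * X a)"
    by (simp add: sum.distrib distrib_right sum_distrib_right)
  also have "\<dots> \<le> (\<Sum>a<n. 5 * X a)"
  proof (rule sum_mono)
    fix a assume a: "a \<in> {..<n}"
    show "(d a + (\<Sum>b<n. w a b)) * X a \<le> 5 * X a"
    proof (cases "a = 0")
      case True then show ?thesis using X0 by simp
    next
      case False
      then have a1: "1 \<le> a" "a < n" using a by auto
      have E0: "E a 0" and d3: "deg n E a \<le> 3" using hyp a1 by auto
      have "(\<Sum>b<n. w a b) = real (card (nbrs n E a - {0}))"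
      proof -
        have "(\<Sum>b<n. w a b) = (\<Sum>b\<in>{..<n}. if b \<in> nbrs n E a - {0} then 1 else 0)"
          unfolding w_def nbrs_def using False by (intro sum.cong refl, auto)
        also have "\<dots> = real (card ({..<n} \<inter> (nbrs n E a - {0})))"
          by (subst sum.If_cases, simp, simp only: Int_def, simp)
        also have "{..<n} \<inter> (nbrs n E a - {0}) = nbrs n E a - {0}" unfolding nbrs_def by auto
        finally show ?thesis .
      qed
      also have "card (nbrs n E a - {0}) = deg n E a - 1"
      proof -
        have "0 \<in> nbrs n E a" unfolding nbrs_def using E0 a1 by auto
        moreover have "finite (nbrs n E a)" unfolding nbrs_def by simp
        ultimately show ?thesis unfolding deg_nbrs by simp
      qed
      finally have "(\<Sum>b<n. w a b) = real (deg n E a - 1)" .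
      moreover have "deg n E a \<ge> 1"
      proof -
        have "0 \<in> nbrs n E a" unfolding nbrs_def using E0 a1 by auto
        then have "nbrs n E a \<noteq> {}" by auto
        moreover have "finite (nbrs n E a)" unfolding nbrs_def by simp
        ultimately show ?thesis unfolding deg_nbrs by (simp add: Suc_leI card_gt_0_iff)
      qed
      ultimately have "d a + (\<Sum>b<n. w a b) \<le> 5" unfolding d_def using d3 by (simp add: of_nat_diff)
      moreover have "X a \<ge> 0" unfolding X_def by simp
      ultimately show ?thesis by (intro mult_right_mono, auto)
    qed
  qed
  also have "\<dots> = 5 * Re (x \<bullet>c x)" unfolding X_def by (simp add: Re_cscalar_self[OF x] sum_distrib_left)
  finally show ?thesis .
qed

lemma star_vec:
  assumes sg: "simple_graph n E" and n2: "2 \<le> n" and hyp: "\<forall>a. 1 \<le> a \<and> a < n \<longrightarrow> E a 0 \<and> E 0 a"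
  shows "\<exists>v\<in>carrier_vec n. v \<noteq> 0\<^sub>v n \<and> Re ((Q_matrix n E *\<^sub>v v) \<bullet>c v) \<ge> real n * Re (v \<bullet>c v)"
proof -
  define f :: "nat \<Rightarrow> real" where "f = (\<lambda>a. if a = 0 then real (n - 1) else 1)"
  define v where "v = vec n (\<lambda>a. complex_of_real (f a))"
  have vc: "v \<in> carrier_vec n" unfolding v_def by simp
  have fpos: "\<And>a. f a \<ge> 0" unfolding f_def by auto
  have v0: "v \<noteq> 0\<^sub>v n"
  proof
    assume "v = 0\<^sub>v n"
    then have "v $ 1 = 0" using n2 by simp
    then show False unfolding v_def f_def using n2 by simp
  qed
  have n0: "nbrs n E 0 = {1..<n}" unfolding nbrs_def using hyp sg unfolding simple_graph_def
    by (auto, metis One_nat_def Suc_leI neq0_conv)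
  have row: "\<And>a. a < n \<Longrightarrow> Re ((Q_matrix n E *\<^sub>v v) $ a) \<ge> real n * f a"
  proof -
    fix a assume a: "a < n"
    have vi: "\<And>j. j < n \<Longrightarrow> v $ j = complex_of_real (f j)" unfolding v_def by simp
    have s1: "(\<Sum>j\<in>nbrs n E a. Re (v $ j)) = (\<Sum>j\<in>nbrs n E a. f j)"
      by (intro sum.cong refl, auto simp: nbrs_def vi)
    have eq: "Re ((Q_matrix n E *\<^sub>v v) $ a) = real (deg n E a) * f a + (\<Sum>j\<in>nbrs n E a. f j)"
      unfolding Q_row[OF vc a sg] using a by (simp add: Re_sum s1 vi)
    show "Re ((Q_matrix n E *\<^sub>v v) $ a) \<ge> real n * f a"
    proof (cases "a = 0")
      case True
      have "(\<Sum>j\<in>nbrs n E a. f j) = real (n - 1)" unfolding True n0 f_def by simp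
      moreover have "deg n E a = n - 1" unfolding deg_nbrs True n0 by simp
      ultimately show ?thesis unfolding eq using True n2 by (simp add: f_def of_nat_diff algebra_simps)
    next
      case False
      have in0: "0 \<in> nbrs n E a" unfolding nbrs_def using hyp a False by auto
      have fin: "finite (nbrs n E a)" unfolding nbrs_def by simp
      have "(\<Sum>j\<in>nbrs n E a. f j) \<ge> f 0" by (rule member_le_sum[OF in0], insert fpos fin, auto)
      moreover have "deg n E a \<ge> 1" unfolding deg_nbrs using in0 fin by (metis One_nat_def Suc_leI card_gt_0_iff empty_iff)
      ultimately show ?thesis unfolding eq using False n2 by (simp add: f_def of_nat_diff)
    qed
  qed
  have "Re ((Q_matrix n E *\<^sub>v v) \<bullet>c v) = (\<Sum>a<n. Re ((Q_matrix n E *\<^sub>v v) $ a) * f a)"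
  proof -
    have "(Q_matrix n E *\<^sub>v v) \<bullet>c v = (\<Sum>a<n. (Q_matrix n E *\<^sub>v v) $ a * cnj (v $ a))"
      by (rule cscalar_sum, insert vc, auto intro: mult_mat_vec_carrier[OF Q_carrier])
    then show ?thesis unfolding v_def by (simp add: Re_sum)
  qed
  also have "\<dots> \<ge> (\<Sum>a<n. real n * f a * f a)"
    by (intro sum_mono mult_right_mono, insert row fpos, auto)
  finally have "Re ((Q_matrix n E *\<^sub>v v) \<bullet>c v) \<ge> real n * (\<Sum>a<n. f a * f a)"
    by (simp add: sum_distrib_left mult.assoc)
  moreover have "Re (v \<bullet>c v) = (\<Sum>a<n. f a * f a)"
    using Re_cscalar_self[OF vc] unfolding v_def by (simp add: power2_eq_square)
  ultimately show ?thesis using vc v0 by auto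
qed


lemma hub:
  fixes z :: "nat \<Rightarrow> real" and d :: "nat \<Rightarrow> nat" and N :: "nat \<Rightarrow> nat set" and \<theta> :: real
  assumes p: "p < n" and n2: "2 \<le> n"
    and N: "\<forall>i<n. N i \<subseteq> {..<n} - {i} \<and> card (N i) = d i"
    and small: "\<forall>i<n. i \<noteq> p \<longrightarrow> d i \<le> 6"
    and z0: "\<forall>i<n. 0 \<le> z i"
    and ineq: "\<forall>i<n. (\<theta> - d i) * z i \<le> (\<Sum>j\<in>N i. z j)"
    and nz: "\<exists>i<n. z i \<noteq> 0"
    and th: "24 \<le> \<theta>" and dp: "d p + 2 \<le> \<theta>"
  shows False
proof -
  define S where "S = {i. i < n \<and> i \<noteq> p}"
  have fS: "finite S" unfolding S_def by simp
  have neS: "S \<noteq> {}"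
  proof -
    have "(if p = 0 then 1 else 0) \<in> S" unfolding S_def using n2 p by auto
    then show ?thesis by blast
  qed
  define M where "M = z p"
  define M' where "M' = Max (z ` S)"
  have M'ge: "\<And>i. i \<in> S \<Longrightarrow> z i \<le> M'" unfolding M'_def using fS by auto
  have "M' \<in> z ` S" unfolding M'_def using fS neS by (intro Max_in) auto
  then obtain i0 where i0: "i0 \<in> S" "z i0 = M'" by auto
  have i0n: "i0 < n" "i0 \<noteq> p" using i0 unfolding S_def by auto
  have M0: "0 \<le> M" unfolding M_def using z0 p by auto
  have M'0: "0 \<le> M'" using i0 z0 i0n by auto
  have fN: "\<And>i. i < n \<Longrightarrow> finite (N i)" using N by (meson finite_Diff finite_lessThan finite_subset)
  have sumb: "\<And>i. i < n \<Longrightarrow> (\<Sum>j\<in>N i. z j) \<le> (if p \<in> N i then M else 0) + real (d i) * M'"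
  proof -
    fix i assume i: "i < n"
    have sub: "N i - {p} \<subseteq> S" using N i unfolding S_def by auto
    have "(\<Sum>j\<in>N i - {p}. z j) \<le> real (card (N i - {p})) * M'"
      by (rule sum_bounded_above, use sub M'ge in auto)
    also have "\<dots> \<le> real (d i) * M'"
    proof -
      have "card (N i - {p}) \<le> card (N i)" using fN[OF i] by (simp add: card_Diff1_le)
      then show ?thesis using N i M'0 by (intro mult_right_mono, auto)
    qed
    finally have a: "(\<Sum>j\<in>N i - {p}. z j) \<le> real (d i) * M'" .
    show "(\<Sum>j\<in>N i. z j) \<le> (if p \<in> N i then M else 0) + real (d i) * M'"
    proof (cases "p \<in> N i")
      case True
      then have "(\<Sum>j\<in>N i. z j) = z p + (\<Sum>j\<in>N i - {p}. z j)" using fN[OF i] by (simp add: sum.remove)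
      then show ?thesis using a True unfolding M_def by simp
    next
      case False
      then have "N i - {p} = N i" by auto
      then show ?thesis using a False by simp
    qed
  qed
  have one: "(\<theta> - 12) * M' \<le> M"
  proof -
    have a: "(\<theta> - d i0) * M' \<le> (\<Sum>j\<in>N i0. z j)" using ineq i0n i0(2) by auto
    have b: "(\<Sum>j\<in>N i0. z j) \<le> M + real (d i0) * M'" using sumb[OF i0n(1)] M0 by (cases "p \<in> N i0") auto
    have d6: "real (d i0) \<le> 6" using small i0n by auto
    have c: "(real (d i0) - 6) * M' \<le> 0" using d6 M'0 by (intro mult_nonpos_nonneg, auto)
    have e: "real (d i0) * M' \<le> 6 * M'" using d6 M'0 by (intro mult_right_mono, auto)
    have "(\<theta> - 6) * M' = (\<theta> - d i0) * M' + (real (d i0) - 6) * M'" by (simp add: algebra_simps)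
    then have "(\<theta> - 6) * M' \<le> M + 6 * M'" using a b c e by linarith
    then show ?thesis by (simp add: algebra_simps)
  qed
  have two: "(\<theta> - d p) * M \<le> real (d p) * M'"
  proof -
    have "p \<notin> N p" using N p by auto
    then show ?thesis using ineq p sumb[OF p] unfolding M_def by auto
  qed
  show False
  proof (cases "M = 0")
    case True
    then have "(\<theta> - 12) * M' \<le> 0" using one by simp
    then have "M' \<le> 0" using th by (simp add: mult_le_0_iff)
    then have "M' = 0" using M'0 by simp
    then have "\<forall>i<n. z i = 0" using M'ge z0 True unfolding S_def M_def by (metis (mono_tags, lifting) mem_Collect_eq order_antisym)
    then show False using nz by blast
  next
    case False
    then have Mp: "M > 0" using M0 by simp
    have "(\<theta> - d p) * M * (\<theta> - 12) \<le> real (d p) * M' * (\<theta> - 12)"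
      using two th by (intro mult_right_mono, auto)
    then have "(\<theta> - d p) * (\<theta> - 12) * M \<le> real (d p) * ((\<theta> - 12) * M')"
      by (simp add: algebra_simps)
    also have "\<dots> \<le> real (d p) * M" using one by (intro mult_left_mono, auto)
    finally have "(\<theta> - d p) * (\<theta> - 12) \<le> real (d p)" using Mp by simp
    moreover have "2 * (\<theta> - 12) \<le> (\<theta> - d p) * (\<theta> - 12)" using dp th by (intro mult_right_mono, auto)
    moreover have "real (d p) + 2 \<le> \<theta>" using dp by simp
    moreover have gen: "\<And>X dd t::real. X \<le> dd \<Longrightarrow> 2 * (t - 12) \<le> X \<Longrightarrow> dd + 2 \<le> t \<Longrightarrow> 24 \<le> t \<Longrightarrow> False"
      by (simp add: algebra_simps)
    ultimately show False using th by blast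
  qed
qed


lemma sum_list_ge3: "\<forall>x\<in>set s. x \<ge> 3 \<Longrightarrow> sum_list s \<ge> 3 * length (s :: nat list)"
  by (induction s, auto)

theorem lemma5p2:
  fixes s :: "nat list" and q n m :: nat and EH :: "nat \<Rightarrow> nat \<Rightarrow> bool"
  assumes "length s \<ge> 2"
    and "q \<ge> 1"
    and "\<forall>x \<in> set s. x \<ge> 3"
    and "n = G_order s q"
    and "simple_graph m EH"
    and "Q_spectrum m EH = Q_spectrum n (G_adj s q)"
    and "n \<ge> 52 \<or> q \<ge> 12"
  shows "max_deg m EH = max_deg n (G_adj s q) \<and> max_deg n (G_adj s q) = n - 1"
proof -
  note ls = assms(1) and s3 = assms(3) and nG = assms(4) and sgH0 = assms(5) and spec0 = assms(6) and big = assms(7)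
  define G where "G = G_adj s q"
  have n31: "n \<ge> 31"
  proof -
    have "sum_list s \<ge> 6" using sum_list_ge3[OF s3] ls by linarith
    then show ?thesis using big nG unfolding G_order_def by auto
  qed
  have mn: "m = n" using Q_size[of m EH] Q_size[of n G] spec0 unfolding G_def by simp
  have sgH: "simple_graph n EH" using sgH0 mn by simp
  have spec: "Q_spectrum n EH = Q_spectrum n G" using spec0 mn unfolding G_def by simp
  have sgG: "simple_graph n G" unfolding G_def nG by (rule G_simple)
  have hyp0: "\<forall>a. 1 \<le> a \<and> a < n \<longrightarrow> G a 0 \<and> G 0 a" unfolding G_def nG using G_0 by auto
  have hyp3: "\<forall>a. 1 \<le> a \<and> a < n \<longrightarrow> G a 0 \<and> deg n G a \<le> 3"
    unfolding G_def nG using G_0 deg_G_le3 by auto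
  define QG where "QG = Q_matrix n G"
  define QH where "QH = Q_matrix n EH"
  have QGc: "QG \<in> carrier_mat n n" and QHc: "QH \<in> carrier_mat n n" unfolding QG_def QH_def by auto
  have hG: "hermitian QG" unfolding QG_def by (rule Q_herm[OF sgG])
  have hH: "hermitian QH" unfolding QH_def by (rule Q_herm[OF sgH])
  have cpeq: "proots (char_poly QH) = proots (char_poly QG)" using spec unfolding Q_spectrum_def QG_def QH_def .
  have cntG: "size (filter_mset (\<lambda>lam. 5 < Re lam) (proots (char_poly QG))) \<le> 1"
  proof (rule count_le1[OF QGc hG])
    show "0 < n" using n31 by simp
    show "\<forall>x\<in>carrier_vec n. x $ 0 = 0 \<longrightarrow> Re ((QG *\<^sub>v x) \<bullet>c x) \<le> 5 * Re (x \<bullet>c x)"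
      unfolding QG_def using G_qf_bound[OF sgG hyp3] by blast
  qed
  have cntH: "size (filter_mset (\<lambda>lam. 5 < Re lam) (proots (char_poly QH))) \<le> 1" using cntG cpeq by simp
  obtain v where vc: "v \<in> carrier_vec n" and v0: "v \<noteq> 0\<^sub>v n" and vq: "Re ((QG *\<^sub>v v) \<bullet>c v) \<ge> real n * Re (v \<bullet>c v)"
    using star_vec[OF sgG _ hyp0] n31 unfolding QG_def by auto
  obtain lam where lamG: "lam \<in># proots (char_poly QG)" and lamI: "Im lam = 0"
    and lamR: "Re ((QG *\<^sub>v v) \<bullet>c v) \<le> Re lam * Re (v \<bullet>c v)"
    using rayleigh[OF QGc hG vc v0] by blast
  have vpos: "Re (v \<bullet>c v) > 0" by (rule cscalar_pos[OF vc v0])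
  have lamn: "Re lam \<ge> real n"
  proof -
    have "real n * Re (v \<bullet>c v) \<le> Re lam * Re (v \<bullet>c v)" using vq lamR by linarith
    then show ?thesis using vpos by simp
  qed
  define \<theta> where "\<theta> = Re lam"
  have lamth: "lam = complex_of_real \<theta>" unfolding \<theta>_def using lamI by (simp add: complex_eq_iff)
  obtain us es where o: "orthonormal n us" and l: "length es = n" and ev: "\<forall>k<n. QH *\<^sub>v (us ! k) = es ! k \<cdot>\<^sub>v us ! k"
    and cp: "proots (char_poly QH) = mset es" and r: "\<forall>k<n. cnj (es ! k) = es ! k"
    using herm_spec[OF QHc hH] by blast
  have "lam \<in> set es" using lamG cpeq cp by (metis set_mset_mset)
  then obtain k where k: "k < n" "es ! k = lam" using l by (auto simp: in_set_conv_nth)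
  define y where "y = us ! k"
  have yc: "y \<in> carrier_vec n" and y1: "y \<bullet>c y = 1" using o k unfolding orthonormal_def y_def by auto
  have ynz: "y \<noteq> 0\<^sub>v n" using y1 by auto
  have ey: "QH *\<^sub>v y = lam \<cdot>\<^sub>v y" using ev k unfolding y_def by auto
  define d where "d = deg n EH"
  have fin: "finite (d ` {..<n})" "d ` {..<n} \<noteq> {}" using n31 by (auto simp: lessThan_empty_iff)
  have "Max (d ` {..<n}) \<in> d ` {..<n}" using fin by (rule Max_in)
  then obtain p where p: "p < n" "d p = Max (d ` {..<n})" by auto
  have pmax: "\<forall>i<n. d i \<le> d p" using p fin by auto
  have small: "\<forall>i<n. i \<noteq> p \<longrightarrow> d i \<le> 6"
  proof (intro allI impI, rule ccontr)
    fix i assume i: "i < n" "i \<noteq> p" "\<not> d i \<le> 6"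
    then have di: "deg n EH i \<ge> 7" and dp: "deg n EH p \<ge> 7" using pmax unfolding d_def by force+
    obtain \<alpha> \<beta> where ab: "\<alpha> \<noteq> 0 \<or> \<beta> \<noteq> 0" and
      le: "Re ((QH *\<^sub>v (\<alpha> \<cdot>\<^sub>v unit_vec n i + \<beta> \<cdot>\<^sub>v unit_vec n p)) \<bullet>c (\<alpha> \<cdot>\<^sub>v unit_vec n i + \<beta> \<cdot>\<^sub>v unit_vec n p))
        \<le> 5 * Re ((\<alpha> \<cdot>\<^sub>v unit_vec n i + \<beta> \<cdot>\<^sub>v unit_vec n p) \<bullet>c (\<alpha> \<cdot>\<^sub>v unit_vec n i + \<beta> \<cdot>\<^sub>v unit_vec n p))"
      using two_vectors[OF QHc hH cntH, of "unit_vec n i" "unit_vec n p"] by auto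
    have "Re ((QH *\<^sub>v (\<alpha> \<cdot>\<^sub>v unit_vec n i + \<beta> \<cdot>\<^sub>v unit_vec n p)) \<bullet>c (\<alpha> \<cdot>\<^sub>v unit_vec n i + \<beta> \<cdot>\<^sub>v unit_vec n p))
        > 5 * Re ((\<alpha> \<cdot>\<^sub>v unit_vec n i + \<beta> \<cdot>\<^sub>v unit_vec n p) \<bullet>c (\<alpha> \<cdot>\<^sub>v unit_vec n i + \<beta> \<cdot>\<^sub>v unit_vec n p))"
      unfolding QH_def by (rule two_big_deg[OF sgH i(1) p(1) i(2) di dp ab])
    then show False using le by linarith
  qed
  define z where "z = (\<lambda>i. cmod (y $ i))"
  have ineq: "\<forall>i<n. (\<theta> - d i) * z i \<le> (\<Sum>j\<in>nbrs n EH i. z j)"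
  proof (intro allI impI)
    fix i assume i: "i < n"
    have "(QH *\<^sub>v y) $ i = of_nat (d i) * y $ i + (\<Sum>j\<in>nbrs n EH i. y $ j)"
      unfolding QH_def d_def by (rule Q_row[OF yc i sgH])
    moreover have "(QH *\<^sub>v y) $ i = lam * y $ i" using ey i yc by simp
    ultimately have "complex_of_real (\<theta> - d i) * y $ i = (\<Sum>j\<in>nbrs n EH i. y $ j)"
      unfolding lamth by (simp add: algebra_simps)
    then have "\<bar>\<theta> - d i\<bar> * z i = cmod (\<Sum>j\<in>nbrs n EH i. y $ j)" unfolding z_def
      by (metis norm_mult norm_of_real)
    also have "\<dots> \<le> (\<Sum>j\<in>nbrs n EH i. z j)" unfolding z_def by (rule norm_sum)
    finally show "(\<theta> - d i) * z i \<le> (\<Sum>j\<in>nbrs n EH i. z j)"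
      by (smt (verit) mult_right_mono norm_ge_zero z_def)
  qed
  have nz: "\<exists>i<n. z i \<noteq> 0"
  proof (rule ccontr)
    assume "\<not> ?thesis"
    then have "\<forall>i<n. y $ i = 0" unfolding z_def by auto
    then have "y = 0\<^sub>v n" using yc by (intro eq_vecI, auto)
    then show False using ynz by simp
  qed
  have Nprop: "\<forall>i<n. nbrs n EH i \<subseteq> {..<n} - {i} \<and> card (nbrs n EH i) = d i"
    using nbrs_sub[OF sgH] unfolding d_def deg_nbrs by auto
  have dpn: "d p = n - 1"
  proof (rule ccontr)
    assume "d p \<noteq> n - 1"
    moreover have "d p \<le> n - 1" unfolding d_def by (rule deg_le[OF sgH p(1)])
    ultimately have "d p + 2 \<le> n" using n31 by linarith
    then have "real (d p + 2) \<le> \<theta>" using lamn unfolding \<theta>_def by linarith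
    moreover have "24 \<le> \<theta>" using lamn n31 unfolding \<theta>_def by linarith
    ultimately show False
      using hub[OF p(1) _ Nprop small _ ineq nz] n31 unfolding z_def by auto
  qed
  have mdH: "max_deg n EH = n - 1"
  proof -
    have "{0..<n} = {..<n}" by auto
    then have "max_deg n EH = Max (d ` {..<n})" unfolding max_deg_def d_def by simp
    then show ?thesis using p dpn by simp
  qed
  have mdG: "max_deg n G = n - 1"
  proof -
    have "Max (deg n G ` {0..<n}) = n - 1"
    proof (rule Max_eqI)
      show "finite (deg n G ` {0..<n})" by simp
      show "\<And>y. y \<in> deg n G ` {0..<n} \<Longrightarrow> y \<le> n - 1" using deg_le[OF sgG] by auto
      show "n - 1 \<in> deg n G ` {0..<n}"
      proof
        show "n - 1 = deg n G 0" unfolding G_def nG by (rule deg_G_0[symmetric])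
        show "0 \<in> {0..<n}" using n31 by simp
      qed
    qed
    then show ?thesis unfolding max_deg_def .
  qed
  show ?thesis using mdH mdG mn unfolding G_def by simp
qed


end
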